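(* Let $\sigma>0$, $\rho_1\ge1$, let $\beta_n=\rho_1^n$ for $n\ge0$, and let $\vec\alpha=(\alpha_n)_{n\ge0}$ be a non-negative sequence, not identically zero, with $$\sum_{m=0}^\infty m\,\alpha_m\rho_1^m<\infty.$$ For each $L\ge1$ let $(\gamma^{(L)}_0,\dots,\gamma^{(L)}_L)$ be a random Motzkin path sampled from $\Pr_L$ (defined in the context), and set $\gamma^{(L)}_k:=0$ for $k>L$. Then the family $\{\gamma^{(L)}_L\}_{L\ge1}$ is not tight, and as $L\to\infty$, $$\Big(\{\gamma^{(L)}_k\}_{k\ge0},\ \{\gamma^{(L)}_{L-k}-\gamma^{(L)}_{L-k+1}\}_{k\ge1}\Big)\Rightarrow\Big(\{Z_k\}_{k\ge0},\{\xi_k\}_{k\ge1}\Big)$$ in the sense of convergence of finite-dimensional distributions (for $k>L$ the increments are set to $0$), where: - $\{Z_k\}_{k\ge0}$ is a Markov chain on $\mathbb Z_{\ge0}$ with transition probabilities $\mathsf Q^{(\rho_1)}_{n,m}$ (defined in the context) and initial law $$\Pr(Z_0=n)=\frac{1}{\mathfrak C_{\vec\alpha,\rho_1}}\,\alpha_n\,\frac{\rho_1^{n+1}-\rho_1^{-(n+1)}}{\rho_1-\rho_1^{-1}},\quad n\ge0,\qquad \mathfrak C_{\vec\alpha,\rho_1}=\sum_{n\ge0}\alpha_n\frac{\rho_1^{n+1}-\rho_1^{-(n+1)}}{\rho_1-\rho_1^{-1}},$$ where for $\rho_1=1$ the ratio $\frac{\rho_1^{n+1}-\rho_1^{-(n+1)}}{\rho_1-\rho_1^{-1}}$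 is interpreted as $n+1$; - $\{\xi_k\}_{k\ge1}$ are i.i.d. with $\Pr(\xi_1=1)=\frac{1/\rho_1}{\rho_1+1/\rho_1+\sigma}$, $\Pr(\xi_1=0)=\frac{\sigma}{\rho_1+1/\rho_1+\sigma}$, $\Pr(\xi_1=-1)=\frac{\rho_1}{\rho_1+1/\rho_1+\sigma}$; - the two families are independent.
   Context: A Motzkin path of length $L\in\mathbb Z_{\ge1}$ is a sequence $\vec\gamma=(\gamma_0,\dots,\gamma_L)$ of non-negative integers with $|\gamma_k-\gamma_{k-1}|\le1$; $\mathcal M^{(L)}$ is the set of all such paths. Its weight is $w(\vec\gamma)=\sigma^{\#\{k:\ \gamma_k=\gamma_{k-1}\}}$. With boundary weights $\vec\alpha,\vec\beta$, $\mathfrak C_{\vec\alpha,\vec\beta,L}=\sum_{\vec\gamma\in\mathcal M^{(L)}}\alpha_{\gamma_0}\beta_{\gamma_L}w(\vec\gamma)$ (finite under the hypotheses) and $\Pr_L(\vec\gamma)=\alpha_{\gamma_0}\beta_{\gamma_L}w(\vec\gamma)/\mathfrak C_{\vec\alpha,\vec\beta,L}$. Transition kernels: for $\rho>0$, $\rho\neq1$, $$\mathsf Q^{(\rho)}_{n,m}=\frac{1}{\rho+1/\rho+\sigma}\begin{cases}\frac{\rho^{n+2}-\rho^{-(n+2)}}{\rho^{n+1}-\rho^{-(n+1)}}, & m=n+1,\\ \sigma, & m=n,\\ \frac{\rho^{n}-\rho^{-n}}{\rho^{n+1}-\rho^{-(n+1)}}, & m=n-1,\\ 0,&\text{otherwise},\end{cases}$$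 and $\mathsf Q^{(1)}_{n,m}$ (the limit as $\rho\to1$) equals $\frac{1}{2+\sigma}\frac{n+2}{n+1}$ if $m=n+1$, $\frac{\sigma}{2+\sigma}$ if $m=n$, $\frac{1}{2+\sigma}\frac{n}{n+1}$ if $m=n-1\ge0$, and $0$ otherwise. *)

theory Defs
  imports "HOL-Analysis.Analysis"
begin

text \<open>A Motzkin path of length L, represented as a function nat => nat which is
  extended by 0 beyond index L (the convention of the paper: gamma_k := 0 for k > L).\<close>
definition motzkin :: "nat \<Rightarrow> (nat \<Rightarrow> nat) \<Rightarrow> bool" where
  "motzkin L \<gamma> \<longleftrightarrow>
     (\<forall>k\<in>{1..L}. \<bar>int (\<gamma> k) - int (\<gamma> (k - 1))\<bar> \<le> 1) \<and> (\<forall>k>L. \<gamma> k = 0)"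

definition mweight :: "real \<Rightarrow> nat \<Rightarrow> (nat \<Rightarrow> nat) \<Rightarrow> real" where
  "mweight \<sigma> L \<gamma> = \<sigma> ^ card {k\<in>{1..L}. \<gamma> k = \<gamma> (k - 1)}"

definition pathmass :: "(nat \<Rightarrow> real) \<Rightarrow> (nat \<Rightarrow> real) \<Rightarrow> real \<Rightarrow> nat \<Rightarrow> (nat \<Rightarrow> nat) \<Rightarrow> real" where
  "pathmass \<alpha> \<beta> \<sigma> L \<gamma> = \<alpha> (\<gamma> 0) * \<beta> (\<gamma> L) * mweight \<sigma> L \<gamma>"

definition Cpart :: "(nat \<Rightarrow> real) \<Rightarrow> (nat \<Rightarrow> real) \<Rightarrow> real \<Rightarrow> nat \<Rightarrow> real" where
  "Cpart \<alpha> \<beta> \<sigma> L = infsum (pathmass \<alpha> \<beta> \<sigma> L) {\<gamma>. motzkin L \<gamma>}"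

definition PrL :: "(nat \<Rightarrow> real) \<Rightarrow> (nat \<Rightarrow> real) \<Rightarrow> real \<Rightarrow> nat \<Rightarrow> ((nat \<Rightarrow> nat) \<Rightarrow> bool) \<Rightarrow> real" where
  "PrL \<alpha> \<beta> \<sigma> L E =
     infsum (pathmass \<alpha> \<beta> \<sigma> L) {\<gamma>. motzkin L \<gamma> \<and> E \<gamma>} / Cpart \<alpha> \<beta> \<sigma> L"

definition Qker :: "real \<Rightarrow> real \<Rightarrow> nat \<Rightarrow> nat \<Rightarrow> real" where
  "Qker \<rho> \<sigma> n m =
    (if \<rho> = 1 then
       (if m = n + 1 then 1 / (2 + \<sigma>) * ((real n + 2) / (real n + 1))
        else if m = n then \<sigma> / (2 + \<sigma>)
        else if m + 1 = n then 1 / (2 + \<sigma>) * (real n / (real n + 1))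
        else 0)
     else
       1 / (\<rho> + 1 / \<rho> + \<sigma>) *
       (if m = n + 1 then (\<rho> ^ (n + 2) - inverse \<rho> ^ (n + 2)) / (\<rho> ^ (n + 1) - inverse \<rho> ^ (n + 1))
        else if m = n then \<sigma>
        else if m + 1 = n then (\<rho> ^ n - inverse \<rho> ^ n) / (\<rho> ^ (n + 1) - inverse \<rho> ^ (n + 1))
        else 0))"

definition hfun :: "real \<Rightarrow> nat \<Rightarrow> real" where
  "hfun \<rho> n = (if \<rho> = 1 then real n + 1
               else (\<rho> ^ (n + 1) - inverse \<rho> ^ (n + 1)) / (\<rho> - inverse \<rho>))"

definition Cinit :: "(nat \<Rightarrow> real) \<Rightarrow> real \<Rightarrow> real" where
  "Cinit \<alpha> \<rho> = infsum (\<lambda>n. \<alpha> n * hfun \<rho> n) UNIV"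

definition Z0law :: "(nat \<Rightarrow> real) \<Rightarrow> real \<Rightarrow> nat \<Rightarrow> real" where
  "Z0law \<alpha> \<rho> n = \<alpha> n * hfun \<rho> n / Cinit \<alpha> \<rho>"

definition xilaw :: "real \<Rightarrow> real \<Rightarrow> int \<Rightarrow> real" where
  "xilaw \<rho> \<sigma> x =
     (if x = 1 then 1 / \<rho> else if x = 0 then \<sigma> else if x = -1 then \<rho> else 0)
       / (\<rho> + 1 / \<rho> + \<sigma>)"

definition incr :: "nat \<Rightarrow> (nat \<Rightarrow> nat) \<Rightarrow> nat \<Rightarrow> int" where
  "incr L \<gamma> k = (if k \<le> L then int (\<gamma> (L - k)) - int (\<gamma> (L - k + 1)) else 0)"

end

theory Submission
  imports Defs "HOL-Analysis.Analysis"
begin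

definition nbr :: "nat \<Rightarrow> nat set" where "nbr i = {i - 1 .. i + 1}"

definition Wop :: "(nat \<Rightarrow> nat \<Rightarrow> real) \<Rightarrow> (nat \<Rightarrow> real) \<Rightarrow> nat \<Rightarrow> real" where
  "Wop w g i = (\<Sum>m\<in>nbr i. w i m * g m)"

fun Vr :: "(nat \<Rightarrow> nat \<Rightarrow> nat \<Rightarrow> real) \<Rightarrow> nat \<Rightarrow> (nat \<Rightarrow> real) \<Rightarrow> nat \<Rightarrow> real" where
  "Vr w 0 g = g"
| "Vr w (Suc n) g = Vr w n (Wop (w (Suc n)) g)"

definition paths :: "nat \<Rightarrow> nat \<Rightarrow> (nat \<Rightarrow> nat) set" where
  "paths L a = {\<gamma>. motzkin L \<gamma> \<and> \<gamma> 0 = a}"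

definition pw :: "(nat \<Rightarrow> nat \<Rightarrow> nat \<Rightarrow> real) \<Rightarrow> nat \<Rightarrow> (nat \<Rightarrow> nat) \<Rightarrow> real" where
  "pw w L \<gamma> = (\<Prod>t\<in>{1..L}. w t (\<gamma> (t - 1)) (\<gamma> t))"

lemma nbr_iff: "m \<in> nbr i \<longleftrightarrow> \<bar>int m - int i\<bar> \<le> 1"
  unfolding nbr_def by auto

lemma paths_0: "paths 0 a = {\<lambda>k. if k = 0 then a else 0}"
  unfolding paths_def motzkin_def by (auto simp: fun_eq_iff)

lemma paths_Suc:
  "paths (Suc L) a = (\<lambda>(\<gamma>, m). \<gamma>(Suc L := m)) ` (SIGMA \<gamma>:paths L a. nbr (\<gamma> L))"
proof (intro equalityI subsetI)
  fix \<delta> assume d: "\<delta> \<in> paths (Suc L) a"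
  let ?g = "\<delta>(Suc L := 0)"
  have "?g \<in> paths L a" using d unfolding paths_def motzkin_def
    by (auto simp: less_Suc_eq)
  moreover have "\<delta> (Suc L) \<in> nbr (?g L)"
  proof -
    have "\<forall>k\<in>{1..Suc L}. \<bar>int (\<delta> k) - int (\<delta> (k - 1))\<bar> \<le> 1"
      using d by (simp add: paths_def motzkin_def)
    hence "\<bar>int (\<delta> (Suc L)) - int (\<delta> (Suc L - 1))\<bar> \<le> 1" by (rule bspec) simp
    thus ?thesis by (simp add: nbr_iff)
  qed
  moreover have "\<delta> = ?g(Suc L := \<delta> (Suc L))" by simp
  ultimately show "\<delta> \<in> (\<lambda>(\<gamma>, m). \<gamma>(Suc L := m)) ` (SIGMA \<gamma>:paths L a. nbr (\<gamma> L))"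
    by (intro image_eqI[where x="(?g, \<delta> (Suc L))"]) auto
next
  fix \<delta> assume "\<delta> \<in> (\<lambda>(\<gamma>, m). \<gamma>(Suc L := m)) ` (SIGMA \<gamma>:paths L a. nbr (\<gamma> L))"
  then obtain \<gamma> m where g: "\<gamma> \<in> paths L a" and m: "m \<in> nbr (\<gamma> L)" and d: "\<delta> = \<gamma>(Suc L := m)"
    by auto
  show "\<delta> \<in> paths (Suc L) a"
    unfolding paths_def motzkin_def
  proof (intro CollectI conjI ballI allI impI)
    fix k assume k: "k \<in> {1..Suc L}"
    show "\<bar>int (\<delta> k) - int (\<delta> (k - 1))\<bar> \<le> 1"
    proof (cases "k = Suc L")
      case True thus ?thesis using m d by (simp add: nbr_iff)
    next
      case False thus ?thesis using g k d unfolding paths_def motzkin_def by auto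
    qed
  next
    fix k assume "Suc L < k" thus "\<delta> k = 0" using g d unfolding paths_def motzkin_def by auto
  next
    show "\<delta> 0 = a" using g d unfolding paths_def by auto
  qed
qed

lemma paths_Suc_inj:
  "inj_on (\<lambda>(\<gamma>, m). \<gamma>(Suc L := m)) (SIGMA \<gamma>:paths L a. nbr (\<gamma> L))"
proof (rule inj_onI, clarsimp)
  fix g1 m1 g2 m2
  assume g1: "g1 \<in> paths L a" and g2: "g2 \<in> paths L a" and e: "g1(Suc L := m1) = g2(Suc L := m2)"
  have "m1 = m2" using fun_cong[OF e, of "Suc L"] by simp
  moreover have "g1 = g2"
  proof
    fix k show "g1 k = g2 k"
    proof (cases "k = Suc L")
      case True thus ?thesis using g1 g2 unfolding paths_def motzkin_def by auto
    next
      case False thus ?thesis using fun_cong[OF e, of k] by simp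
    qed
  qed
  ultimately show "g1 = g2 \<and> m1 = m2" by simp
qed

lemma finite_nbr: "finite (nbr i)" unfolding nbr_def by simp

lemma pw_Suc:
  assumes "\<gamma> \<in> paths L a"
  shows "pw w (Suc L) (\<gamma>(Suc L := m)) = pw w L \<gamma> * w (Suc L) (\<gamma> L) m"
proof -
  have "pw w (Suc L) (\<gamma>(Suc L := m)) = (\<Prod>t\<in>{1..L}. w t ((\<gamma>(Suc L := m)) (t - 1)) ((\<gamma>(Suc L := m)) t)) * w (Suc L) (\<gamma> L) m"
    unfolding pw_def by (simp add: prod.cl_ivl_Suc)
  also have "(\<Prod>t\<in>{1..L}. w t ((\<gamma>(Suc L := m)) (t - 1)) ((\<gamma>(Suc L := m)) t)) = pw w L \<gamma>"
    unfolding pw_def by (intro prod.cong) auto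
  finally show ?thesis .
qed

lemma path_sum:
  "finite (paths L a) \<and> (\<Sum>\<gamma>\<in>paths L a. pw w L \<gamma> * g (\<gamma> L)) = Vr w L g a"
proof (induction L arbitrary: g)
  case 0
  show ?case by (simp add: paths_0 pw_def)
next
  case (Suc L)
  let ?f = "\<lambda>(\<gamma>::nat\<Rightarrow>nat, m). \<gamma>(Suc L := m)"
  let ?S = "SIGMA \<gamma>:paths L a. nbr (\<gamma> L)"
  have fin: "finite ?S" using Suc.IH finite_nbr by auto
  have "(\<Sum>\<gamma>\<in>paths (Suc L) a. pw w (Suc L) \<gamma> * g (\<gamma> (Suc L)))
      = (\<Sum>p\<in>?S. pw w (Suc L) (?f p) * g (?f p (Suc L)))"
    unfolding paths_Suc by (subst sum.reindex[OF paths_Suc_inj]) (simp add: case_prod_beta)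
  also have "\<dots> = (\<Sum>(\<gamma>, m)\<in>?S. pw w (Suc L) (\<gamma>(Suc L := m)) * g m)"
    by (intro sum.cong refl) auto
  also have "\<dots> = (\<Sum>\<gamma>\<in>paths L a. \<Sum>m\<in>nbr (\<gamma> L). pw w (Suc L) (\<gamma>(Suc L := m)) * g m)"
    by (rule sum.Sigma[symmetric]) (use Suc.IH finite_nbr in auto)
  also have "\<dots> = (\<Sum>\<gamma>\<in>paths L a. pw w L \<gamma> * Wop (w (Suc L)) g (\<gamma> L))"
    unfolding Wop_def
    by (intro sum.cong refl) (simp add: pw_Suc sum_distrib_left mult.assoc)
  also have "\<dots> = Vr w (Suc L) g a" using Suc.IH by simp
  finally show ?case using fin paths_Suc by simp
qed


definition wT :: "real \<Rightarrow> nat \<Rightarrow> nat \<Rightarrow> nat \<Rightarrow> real" where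
  "wT \<sigma> t i m = (if i = m then \<sigma> else 1)"

definition Top :: "real \<Rightarrow> (nat \<Rightarrow> real) \<Rightarrow> nat \<Rightarrow> real" where
  "Top \<sigma> g i = (if i = 0 then 0 else g (i - 1)) + \<sigma> * g i + g (i + 1)"

fun Tp :: "real \<Rightarrow> nat \<Rightarrow> (nat \<Rightarrow> real) \<Rightarrow> nat \<Rightarrow> real" where
  "Tp \<sigma> 0 g = g"
| "Tp \<sigma> (Suc n) g = Top \<sigma> (Tp \<sigma> n g)"

lemma mweight_pw: "mweight \<sigma> L \<gamma> = pw (wT \<sigma>) L \<gamma>"
proof -
  have "pw (wT \<sigma>) L \<gamma> = (\<Prod>t\<in>{1..L}. if \<gamma> t = \<gamma> (t - 1) then \<sigma> else 1)"
    unfolding pw_def wT_def by (intro prod.cong) auto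
  also have "\<dots> = (\<Prod>t\<in>{k\<in>{1..L}. \<gamma> k = \<gamma> (k - 1)}. \<sigma>)"
    by (subst prod.inter_filter) auto
  also have "\<dots> = mweight \<sigma> L \<gamma>" unfolding mweight_def by simp
  finally show ?thesis by simp
qed

lemma Wop_wT: "Wop (wT \<sigma> t) g i = Top \<sigma> g i"
proof (cases i)
  case 0
  have "nbr 0 = {0, 1}" unfolding nbr_def by auto
  thus ?thesis using 0 by (simp add: Wop_def Top_def wT_def)
next
  case (Suc j)
  have "nbr i = {j, Suc j, Suc (Suc j)}" unfolding nbr_def Suc by auto
  thus ?thesis using Suc by (simp add: Wop_def Top_def wT_def)
qed

lemma Tp_Suc': "Tp \<sigma> (Suc n) g = Tp \<sigma> n (Top \<sigma> g)"
  by (induction n) auto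

lemma Vr_wT: "Vr (wT \<sigma>) n g = Tp \<sigma> n g"
proof (induction n arbitrary: g)
  case 0 thus ?case by simp
next
  case (Suc n)
  have "Wop (wT \<sigma> (Suc n)) g = Top \<sigma> g" by (rule ext) (simp add: Wop_wT)
  hence "Vr (wT \<sigma>) (Suc n) g = Vr (wT \<sigma>) n (Top \<sigma> g)" by simp
  also have "\<dots> = Tp \<sigma> n (Top \<sigma> g)" by (rule Suc.IH)
  finally show ?case by (simp only: Tp_Suc')
qed

lemma Vr_add: "Vr w (n + m) g = Vr w n (Vr (\<lambda>t. w (t + n)) m g)"
proof (induction m arbitrary: g)
  case 0 thus ?case by simp
next
  case (Suc m)
  have "Vr w (n + Suc m) g = Vr w (n + m) (Wop (w (Suc (n + m))) g)" by simp
  also have "\<dots> = Vr w n (Vr (\<lambda>t. w (t + n)) m (Wop (w (Suc (n + m))) g))" by (rule Suc.IH)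
  also have "\<dots> = Vr w n (Vr (\<lambda>t. w (t + n)) (Suc m) g)" by (simp add: add.commute)
  finally show ?case .
qed

lemma Vr_cong: "(\<And>t. t \<in> {1..n} \<Longrightarrow> w t = w' t) \<Longrightarrow> Vr w n g = Vr w' n g"
proof (induction n arbitrary: g)
  case 0 thus ?case by simp
next
  case (Suc n)
  have "w (Suc n) = w' (Suc n)" using Suc.prems by simp
  thus ?case using Suc by simp
qed

lemma has_sum_Union_nat:
  fixes f :: "'b \<Rightarrow> real" and B :: "nat \<Rightarrow> 'b set"
  assumes f: "\<And>a. (f has_sum s a) (B a)" and s: "(s has_sum S) UNIV"
    and nn: "\<And>a x. x \<in> B a \<Longrightarrow> f x \<ge> 0" and disj: "disjoint_family B"
  shows "(f has_sum S) (\<Union>a. B a)"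
proof -
  have f': "\<And>x. x \<in> UNIV \<Longrightarrow> ((\<lambda>y. (f \<circ> snd) (x, y)) has_sum s x) (B x)"
    using f by simp
  have sm: "(f \<circ> snd) summable_on (Sigma UNIV B)"
    apply (rule summable_on_SigmaI[where g = s, OF f'])
    using s nn by (auto dest: has_sum_imp_summable)
  have "((f \<circ> snd) has_sum S) (Sigma UNIV B)"
    by (rule has_sum_SigmaI[OF f' s sm])
  moreover have "inj_on snd (Sigma UNIV B)"
  proof (rule inj_onI)
    fix p q assume p: "p \<in> Sigma UNIV B" and q: "q \<in> Sigma UNIV B" and e: "snd p = snd q"
    obtain a x where pa: "p = (a, x)" and x: "x \<in> B a" using p by auto
    obtain b y where qb: "q = (b, y)" and y: "y \<in> B b" using q by auto
    have xy: "x = y" using e pa qb by simp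
    have "a = b"
    proof (rule ccontr)
      assume "a \<noteq> b"
      hence "B a \<inter> B b = {}" using disj unfolding disjoint_family_on_def by simp
      thus False using x y xy by blast
    qed
    thus "p = q" using pa qb xy by simp
  qed
  moreover have "snd ` Sigma UNIV B = (\<Union>a. B a)" by force
  ultimately show ?thesis using has_sum_reindex[of snd "Sigma UNIV B" f S] by simp
qed

lemma pathmass_pw: "pathmass \<alpha> \<beta> \<sigma> L \<gamma> = \<alpha> (\<gamma> 0) * (pw (wT \<sigma>) L \<gamma> * \<beta> (\<gamma> L))"
  unfolding pathmass_def mweight_pw by simp

lemma endpoint_has_sum:
  fixes \<alpha> \<beta> :: "nat \<Rightarrow> real"
  assumes a: "\<And>n. \<alpha> n \<ge> 0" and b: "\<And>n. \<beta> n \<ge> 0" and sg: "\<sigma> \<ge> 0"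
    and sm: "summable (\<lambda>a. \<alpha> a * Tp \<sigma> L (\<lambda>j. if P j then \<beta> j else 0) a)"
  shows "(pathmass \<alpha> \<beta> \<sigma> L has_sum (\<Sum>a. \<alpha> a * Tp \<sigma> L (\<lambda>j. if P j then \<beta> j else 0) a))
           {\<gamma>. motzkin L \<gamma> \<and> P (\<gamma> L)}"
proof -
  let ?B = "\<lambda>a. {\<gamma>\<in>paths L a. P (\<gamma> L)}"
  let ?s = "\<lambda>a. \<alpha> a * Tp \<sigma> L (\<lambda>j. if P j then \<beta> j else 0) a"
  have pwnn: "pw (wT \<sigma>) L \<gamma> \<ge> 0" for \<gamma>
    unfolding pw_def wT_def using sg by (intro prod_nonneg) auto
  have fin: "finite (?B a)" for a using path_sum[of L a] by auto
  have feq: "sum (pathmass \<alpha> \<beta> \<sigma> L) (?B a) = ?s a" for a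
  proof -
    have "sum (pathmass \<alpha> \<beta> \<sigma> L) (?B a)
        = (\<Sum>\<gamma>\<in>paths L a. if P (\<gamma> L) then pathmass \<alpha> \<beta> \<sigma> L \<gamma> else 0)"
      using path_sum[of L a] by (subst sum.inter_filter) auto
    also have "\<dots> = \<alpha> a * (\<Sum>\<gamma>\<in>paths L a. pw (wT \<sigma>) L \<gamma> * (if P (\<gamma> L) then \<beta> (\<gamma> L) else 0))"
      unfolding sum_distrib_left pathmass_pw by (intro sum.cong) (auto simp: paths_def)
    also have "\<dots> = ?s a" using path_sum[of L a "wT \<sigma>" "\<lambda>j. if P j then \<beta> j else 0"] by (simp add: Vr_wT)
    finally show ?thesis .
  qed
  have f: "(pathmass \<alpha> \<beta> \<sigma> L has_sum ?s a) (?B a)" for a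
    using has_sum_finite[OF fin[of a], of "pathmass \<alpha> \<beta> \<sigma> L"] feq[of a] by simp
  have s: "(?s has_sum (\<Sum>a. ?s a)) UNIV"
  proof (rule sums_nonneg_imp_has_sum)
    show "?s sums (\<Sum>a. ?s a)" using sm by (simp add: summable_sums)
  next
    fix n
    have "0 \<le> (\<Sum>\<gamma>\<in>?B n. pathmass \<alpha> \<beta> \<sigma> L \<gamma>)"
      by (intro sum_nonneg) (auto simp: pathmass_pw paths_def intro!: mult_nonneg_nonneg a b pwnn)
    thus "?s n \<ge> 0" using feq[of n] by simp
  qed
  have "(pathmass \<alpha> \<beta> \<sigma> L has_sum (\<Sum>a. ?s a)) (\<Union>a. ?B a)"
    by (rule has_sum_Union_nat[OF f s])
       (auto simp: pathmass_pw paths_def disjoint_family_on_def intro!: mult_nonneg_nonneg a b pwnn)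
  moreover have "(\<Union>a. ?B a) = {\<gamma>. motzkin L \<gamma> \<and> P (\<gamma> L)}" by (auto simp: paths_def)
  ultimately show ?thesis by simp
qed


definition Ccond :: "nat \<Rightarrow> nat \<Rightarrow> (nat \<Rightarrow> nat) \<Rightarrow> (nat \<Rightarrow> int) \<Rightarrow> nat \<Rightarrow> nat \<Rightarrow> nat \<Rightarrow> bool" where
  "Ccond K L z x t i m \<longleftrightarrow> (t \<le> K \<longrightarrow> i = z (t - 1) \<and> m = z t) \<and>
                           (L - K < t \<longrightarrow> int i - int m = x (L + 1 - t))"

definition wc :: "real \<Rightarrow> nat \<Rightarrow> nat \<Rightarrow> (nat \<Rightarrow> nat) \<Rightarrow> (nat \<Rightarrow> int) \<Rightarrow> nat \<Rightarrow> nat \<Rightarrow> nat \<Rightarrow> real" where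
  "wc \<sigma> K L z x t i m = wT \<sigma> t i m * (if Ccond K L z x t i m then 1 else 0)"

lemma cyl_event_iff:
  assumes KL: "K + K \<le> L" and g: "\<gamma> \<in> paths L (z 0)"
  shows "((\<forall>k\<le>K. \<gamma> k = z k) \<and> (\<forall>k\<in>{1..K}. incr L \<gamma> k = x k)) \<longleftrightarrow>
         (\<forall>t\<in>{1..L}. Ccond K L z x t (\<gamma> (t - 1)) (\<gamma> t))"
proof
  assume A: "(\<forall>k\<le>K. \<gamma> k = z k) \<and> (\<forall>k\<in>{1..K}. incr L \<gamma> k = x k)"
  show "\<forall>t\<in>{1..L}. Ccond K L z x t (\<gamma> (t - 1)) (\<gamma> t)"
  proof
    fix t assume t: "t \<in> {1..L}"
    have 1: "t \<le> K \<longrightarrow> \<gamma> (t - 1) = z (t - 1) \<and> \<gamma> t = z t" using A by auto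
    have 2: "L - K < t \<longrightarrow> int (\<gamma> (t - 1)) - int (\<gamma> t) = x (L + 1 - t)"
    proof
      assume "L - K < t"
      hence k: "L + 1 - t \<in> {1..K}" using t KL by auto
      hence "incr L \<gamma> (L + 1 - t) = x (L + 1 - t)" using A by blast
      moreover have "L - (L + 1 - t) = t - 1" "L - (L + 1 - t) + 1 = t" using t by auto
      ultimately show "int (\<gamma> (t - 1)) - int (\<gamma> t) = x (L + 1 - t)"
        unfolding incr_def using k KL by (auto split: if_splits)
    qed
    show "Ccond K L z x t (\<gamma> (t - 1)) (\<gamma> t)" unfolding Ccond_def using 1 2 by blast
  qed
next
  assume B: "\<forall>t\<in>{1..L}. Ccond K L z x t (\<gamma> (t - 1)) (\<gamma> t)"
  have "\<gamma> k = z k" if k: "k \<le> K" for k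
  proof (cases k)
    case 0 thus ?thesis using g by (simp add: paths_def)
  next
    case (Suc k')
    hence "k \<in> {1..L}" using k KL by auto
    thus ?thesis using B k unfolding Ccond_def by auto
  qed
  moreover have "incr L \<gamma> k = x k" if k: "k \<in> {1..K}" for k
  proof -
    have t: "L + 1 - k \<in> {1..L}" "L - K < L + 1 - k" using k KL by auto
    hence "int (\<gamma> (L + 1 - k - 1)) - int (\<gamma> (L + 1 - k)) = x (L + 1 - (L + 1 - k))"
      using B unfolding Ccond_def by blast
    moreover have "L + 1 - k - 1 = L - k" "L + 1 - k = L - k + 1" "L + 1 - (L + 1 - k) = k"
      using k KL by auto
    ultimately show ?thesis unfolding incr_def using k KL by auto
  qed
  ultimately show "(\<forall>k\<le>K. \<gamma> k = z k) \<and> (\<forall>k\<in>{1..K}. incr L \<gamma> k = x k)" by blast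
qed

lemma prod_indicator:
  assumes "finite A"
  shows "(\<Prod>t\<in>A. (if P t then 1 else 0 :: real)) = (if \<forall>t\<in>A. P t then 1 else 0)"
proof (cases "\<forall>t\<in>A. P t")
  case True thus ?thesis by simp
next
  case False
  then obtain t where "t \<in> A" "\<not> P t" by blast
  thus ?thesis using assms by (auto intro: prod_zero)
qed

lemma pw_wc:
  "pw (wc \<sigma> K L z x) L \<gamma> = pw (wT \<sigma>) L \<gamma> *
      (if \<forall>t\<in>{1..L}. Ccond K L z x t (\<gamma> (t - 1)) (\<gamma> t) then 1 else 0)"
  unfolding pw_def wc_def prod.distrib by (subst prod_indicator) auto

lemma cyl_sum:
  assumes KL: "K + K \<le> L"
  shows "infsum (pathmass \<alpha> \<beta> \<sigma> L)
           {\<gamma>. motzkin L \<gamma> \<and> ((\<forall>k\<le>K. \<gamma> k = z k) \<and> (\<forall>k\<in>{1..K}. incr L \<gamma> k = x k))}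
         = \<alpha> (z 0) * Vr (wc \<sigma> K L z x) L \<beta> (z 0)"
proof -
  let ?E = "\<lambda>\<gamma>. (\<forall>k\<le>K. \<gamma> k = z k) \<and> (\<forall>k\<in>{1..K}. incr L \<gamma> k = x k)"
  have fin: "finite (paths L (z 0))" using path_sum by blast
  have eq: "{\<gamma>. motzkin L \<gamma> \<and> ?E \<gamma>} = {\<gamma>\<in>paths L (z 0). ?E \<gamma>}"
    by (auto simp: paths_def)
  have "infsum (pathmass \<alpha> \<beta> \<sigma> L) {\<gamma>. motzkin L \<gamma> \<and> ?E \<gamma>}
      = sum (pathmass \<alpha> \<beta> \<sigma> L) {\<gamma>\<in>paths L (z 0). ?E \<gamma>}"
    unfolding eq using fin by (intro infsum_finite) auto
  also have "\<dots> = (\<Sum>\<gamma>\<in>paths L (z 0). if ?E \<gamma> then pathmass \<alpha> \<beta> \<sigma> L \<gamma> else 0)"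
    using fin by (subst sum.inter_filter) auto
  also have "\<dots> = (\<Sum>\<gamma>\<in>paths L (z 0). \<alpha> (z 0) * (pw (wc \<sigma> K L z x) L \<gamma> * \<beta> (\<gamma> L)))"
  proof (intro sum.cong refl)
    fix \<gamma> assume g: "\<gamma> \<in> paths L (z 0)"
    hence g0: "\<gamma> 0 = z 0" by (simp add: paths_def)
    show "(if ?E \<gamma> then pathmass \<alpha> \<beta> \<sigma> L \<gamma> else 0) = \<alpha> (z 0) * (pw (wc \<sigma> K L z x) L \<gamma> * \<beta> (\<gamma> L))"
      unfolding pw_wc pathmass_pw cyl_event_iff[where z=z and x=x, OF KL g] g0 by simp
  qed
  also have "\<dots> = \<alpha> (z 0) * Vr (wc \<sigma> K L z x) L \<beta> (z 0)"
    using path_sum[of L "z 0" "wc \<sigma> K L z x" \<beta>] by (simp add: sum_distrib_left[symmetric])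
  finally show ?thesis .
qed

definition stw :: "real \<Rightarrow> nat \<Rightarrow> nat \<Rightarrow> real" where
  "stw \<sigma> i m = (if m \<in> nbr i then (if i = m then \<sigma> else 1) else 0)"

definition wfst :: "real \<Rightarrow> (nat \<Rightarrow> nat) \<Rightarrow> nat \<Rightarrow> nat \<Rightarrow> nat \<Rightarrow> real" where
  "wfst \<sigma> z t i m = wT \<sigma> t i m * (if i = z (t - 1) \<and> m = z t then 1 else 0)"

lemma first_seg:
  "Vr (wfst \<sigma> z) n g (z 0) = (\<Prod>t\<in>{1..n}. stw \<sigma> (z (t - 1)) (z t)) * g (z n)"
proof (induction n arbitrary: g)
  case 0 thus ?case by simp
next
  case (Suc n)
  have W: "Wop (wfst \<sigma> z (Suc n)) g j = (if j = z n then stw \<sigma> (z n) (z (Suc n)) * g (z (Suc n)) else 0)" for j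
  proof (cases "j = z n")
    case True
    have "Wop (wfst \<sigma> z (Suc n)) g j = (\<Sum>m\<in>nbr j. if m = z (Suc n) then wT \<sigma> (Suc n) j m * g m else 0)"
      unfolding Wop_def wfst_def using True by (intro sum.cong) auto
    also have "\<dots> = stw \<sigma> (z n) (z (Suc n)) * g (z (Suc n))"
      using True finite_nbr by (simp add: stw_def wT_def)
    finally show ?thesis using True by simp
  next
    case False thus ?thesis unfolding Wop_def wfst_def by simp
  qed
  have "Vr (wfst \<sigma> z) (Suc n) g (z 0) = Vr (wfst \<sigma> z) n (Wop (wfst \<sigma> z (Suc n)) g) (z 0)" by simp
  also have "\<dots> = (\<Prod>t\<in>{1..n}. stw \<sigma> (z (t - 1)) (z t)) * Wop (wfst \<sigma> z (Suc n)) g (z n)"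
    by (rule Suc.IH)
  also have "\<dots> = (\<Prod>t\<in>{1..Suc n}. stw \<sigma> (z (t - 1)) (z t)) * g (z (Suc n))"
    by (simp add: W prod.cl_ivl_Suc)
  finally show ?case .
qed

definition xf :: "real \<Rightarrow> real \<Rightarrow> int \<Rightarrow> real" where
  "xf \<rho> \<sigma> y = (if y = 1 then 1 / \<rho> else if y = 0 then \<sigma> else if y = -1 then \<rho> else 0)"

definition wy :: "real \<Rightarrow> (nat \<Rightarrow> int) \<Rightarrow> nat \<Rightarrow> nat \<Rightarrow> nat \<Rightarrow> real" where
  "wy \<sigma> y t i m = wT \<sigma> t i m * (if int i - int m = y t then 1 else 0)"

lemma Wop_wy:
  "Wop (wy \<sigma> y s) g i =
     (if \<bar>y s\<bar> \<le> 1 \<and> y s \<le> int i then (if y s = 0 then \<sigma> else 1) * g (nat (int i - y s)) else 0)"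
proof (cases "y s \<le> int i")
  case True
  let ?m = "nat (int i - y s)"
  have "Wop (wy \<sigma> y s) g i = (\<Sum>m\<in>nbr i. if m = ?m then wT \<sigma> s i m * g m else 0)"
    unfolding Wop_def wy_def using True by (intro sum.cong) auto
  also have "\<dots> = (if ?m \<in> nbr i then wT \<sigma> s i ?m * g ?m else 0)"
    using finite_nbr by simp
  also have "\<dots> = (if \<bar>y s\<bar> \<le> 1 \<and> y s \<le> int i then (if y s = 0 then \<sigma> else 1) * g ?m else 0)"
    using True by (auto simp: nbr_iff wT_def)
  finally show ?thesis .
next
  case False
  hence "Wop (wy \<sigma> y s) g i = 0" unfolding Wop_def wy_def by (intro sum.neutral) auto
  thus ?thesis using False by simp
qed

lemma end_step:
  assumes r: "\<rho> \<ge> 1" and s: "\<sigma> \<ge> 0"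
    and g1: "\<forall>j\<ge>q. g j = c * \<rho> ^ j" and g2: "\<forall>j. 0 \<le> g j \<and> g j \<le> D * \<rho> ^ j"
  shows "(\<forall>j\<ge>q + 1. Wop (wy \<sigma> y t) g j = c * xf \<rho> \<sigma> (y t) * \<rho> ^ j) \<and>
         (\<forall>j. 0 \<le> Wop (wy \<sigma> y t) g j \<and> Wop (wy \<sigma> y t) g j \<le> D * ((\<sigma> + 1) * \<rho>) * \<rho> ^ j)"
proof (intro conjI allI impI)
  fix j :: nat assume j: "j \<ge> q + 1"
  show "Wop (wy \<sigma> y t) g j = c * xf \<rho> \<sigma> (y t) * \<rho> ^ j"
  proof (cases "\<bar>y t\<bar> \<le> 1")
    case False thus ?thesis by (auto simp: Wop_wy xf_def)
  next
    case True
    hence cases: "y t = 1 \<or> y t = 0 \<or> y t = -1" by auto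
    have yj: "y t \<le> int j" using True j by auto
    have ge: "nat (int j - y t) \<ge> q" using True j by auto
    have "Wop (wy \<sigma> y t) g j = (if y t = 0 then \<sigma> else 1) * (c * \<rho> ^ nat (int j - y t))"
      using True yj g1 ge by (simp add: Wop_wy)
    also have "\<dots> = c * xf \<rho> \<sigma> (y t) * \<rho> ^ j"
    proof -
      { assume y: "y t = 1"
        obtain j' where j': "j = Suc j'" using j by (cases j) auto
        have "nat (int j - y t) = j'" using y j' by auto
        moreover have "\<rho> ^ j = \<rho> ^ j' * \<rho>" using j' by simp
        moreover have "\<rho> \<noteq> 0" using r by simp
        ultimately have ?thesis using y by (simp add: xf_def) }
      moreover
      { assume y: "y t = 0"
        have ?thesis using y by (simp add: xf_def) }
      moreover
      { assume y: "y t = -1"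
        have "nat (int j - y t) = j + 1" using y by auto
        hence ?thesis using y by (simp add: xf_def) }
      ultimately show ?thesis using cases by blast
    qed
    finally show ?thesis .
  qed
next
  fix j :: nat
  show "0 \<le> Wop (wy \<sigma> y t) g j" using g2 s by (simp add: Wop_wy)
next
  fix j :: nat
  show "Wop (wy \<sigma> y t) g j \<le> D * ((\<sigma> + 1) * \<rho>) * \<rho> ^ j"
  proof (cases "\<bar>y t\<bar> \<le> 1 \<and> y t \<le> int j")
    case False
    have D0: "D \<ge> 0" using g2[rule_format, of 0] by simp
    have "Wop (wy \<sigma> y t) g j = 0" using False by (simp only: Wop_wy if_False)
    moreover have "0 \<le> D * ((\<sigma> + 1) * \<rho>) * \<rho> ^ j" using D0 r s by simp
    ultimately show ?thesis by simp
  next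
    case True
    have D0: "D \<ge> 0" using g2[rule_format, of 0] by simp
    have le: "nat (int j - y t) \<le> j + 1" using True by auto
    have p: "\<rho> ^ nat (int j - y t) \<le> \<rho> ^ (j + 1)" by (rule power_increasing[OF le r])
    have "g (nat (int j - y t)) \<le> D * \<rho> ^ (j + 1)"
      using g2 p D0 by (meson mult_left_mono order_trans)
    moreover have "(if y t = 0 then \<sigma> else 1) \<le> \<sigma> + 1" using s by auto
    moreover have "0 \<le> g (nat (int j - y t))" using g2 by simp
    ultimately have e2: "(if y t = 0 then \<sigma> else 1) * g (nat (int j - y t)) \<le> (\<sigma> + 1) * (D * \<rho> ^ (j + 1))"
      using s by (intro mult_mono) auto
    have e3: "(\<sigma> + 1) * (D * \<rho> ^ (j + 1)) = D * ((\<sigma> + 1) * \<rho>) * \<rho> ^ j" by (simp add: mult_ac)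
    have e1: "Wop (wy \<sigma> y t) g j = (if y t = 0 then \<sigma> else 1) * g (nat (int j - y t))"
      using True by (simp only: Wop_wy if_True simp_thms)
    have "(if y t = 0 then \<sigma> else 1) * g (nat (int j - y t)) \<le> D * ((\<sigma> + 1) * \<rho>) * \<rho> ^ j"
      using e2 e3 by (rule ord_le_eq_trans)
    thus ?thesis by (subst e1)
  qed
qed

lemma end_seg:
  assumes r: "\<rho> \<ge> 1" and s: "\<sigma> \<ge> 0"
    and g1: "\<forall>j\<ge>q. g j = c * \<rho> ^ j" and g2: "\<forall>j. 0 \<le> g j \<and> g j \<le> D * \<rho> ^ j"
  shows "(\<forall>j\<ge>q + n. Vr (wy \<sigma> y) n g j = c * (\<Prod>t\<in>{1..n}. xf \<rho> \<sigma> (y t)) * \<rho> ^ j) \<and>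
         (\<forall>j. 0 \<le> Vr (wy \<sigma> y) n g j \<and> Vr (wy \<sigma> y) n g j \<le> D * ((\<sigma> + 1) * \<rho>) ^ n * \<rho> ^ j)"
  using g1 g2
proof (induction n arbitrary: g q c D)
  case 0 thus ?case by simp
next
  case (Suc n)
  let ?g = "Wop (wy \<sigma> y (Suc n)) g"
  have st: "(\<forall>j\<ge>q + 1. ?g j = (c * xf \<rho> \<sigma> (y (Suc n))) * \<rho> ^ j) \<and>
         (\<forall>j. 0 \<le> ?g j \<and> ?g j \<le> (D * ((\<sigma> + 1) * \<rho>)) * \<rho> ^ j)"
    using end_step[OF r s Suc.prems] by simp
  have IH: "(\<forall>j\<ge>(q + 1) + n. Vr (wy \<sigma> y) n ?g j = (c * xf \<rho> \<sigma> (y (Suc n))) * (\<Prod>t\<in>{1..n}. xf \<rho> \<sigma> (y t)) * \<rho> ^ j) \<and>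
         (\<forall>j. 0 \<le> Vr (wy \<sigma> y) n ?g j \<and> Vr (wy \<sigma> y) n ?g j \<le> (D * ((\<sigma> + 1) * \<rho>)) * ((\<sigma> + 1) * \<rho>) ^ n * \<rho> ^ j)"
    using st by (intro Suc.IH) auto
  show ?case using IH by (simp add: prod.cl_ivl_Suc field_simps)
qed


fun U :: "real \<Rightarrow> nat \<Rightarrow> int \<Rightarrow> real" where
  "U \<sigma> 0 d = (if d = 0 then 1 else 0)"
| "U \<sigma> (Suc n) d = U \<sigma> n (d - 1) + \<sigma> * U \<sigma> n d + U \<sigma> n (d + 1)"

definition Zw :: "nat \<Rightarrow> int set" where "Zw n = {- int n .. int n}"

lemma finite_Zw[simp]: "finite (Zw n)" by (simp add: Zw_def)
lemma card_Zw: "card (Zw n) = 2 * n + 1" by (simp add: Zw_def)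
lemma Zw_iff: "d \<in> Zw n \<longleftrightarrow> \<bar>d\<bar> \<le> int n" by (auto simp: Zw_def)

lemma U_nonneg: "\<sigma> \<ge> 0 \<Longrightarrow> U \<sigma> n d \<ge> 0"
  by (induction n arbitrary: d) auto

lemma U_supp: "\<bar>d\<bar> > int n \<Longrightarrow> U \<sigma> n d = 0"
  by (induction n arbitrary: d) auto

lemma U_supp': "d \<notin> Zw n \<Longrightarrow> U \<sigma> n d = 0"
  using U_supp by (auto simp: Zw_iff)

lemma U_sym: "U \<sigma> n (- d) = U \<sigma> n d"
proof (induction n arbitrary: d)
  case 0 thus ?case by simp
next
  case (Suc n)
  have "U \<sigma> n (- d - 1) = U \<sigma> n (d + 1)" using Suc[of "d + 1"] by simp
  moreover have "U \<sigma> n (- d + 1) = U \<sigma> n (d - 1)" using Suc[of "d - 1"] by simp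
  ultimately show ?case using Suc[of d] by simp
qed

lemma U_pos: "\<sigma> > 0 \<Longrightarrow> \<bar>d\<bar> \<le> int n \<Longrightarrow> U \<sigma> n d > 0"
proof (induction n arbitrary: d)
  case 0 thus ?case by simp
next
  case (Suc n)
  have nn: "U \<sigma> n e \<ge> 0" for e using Suc.prems U_nonneg by simp
  show ?case
  proof (cases "\<bar>d\<bar> \<le> int n")
    case True
    hence "\<sigma> * U \<sigma> n d > 0" using Suc by simp
    thus ?thesis using nn[of "d - 1"] nn[of "d + 1"] by simp
  next
    case False
    show ?thesis
    proof (cases "d > 0")
      case True
      hence "U \<sigma> n (d - 1) > 0" using False Suc by (intro Suc.IH) auto
      thus ?thesis using nn[of d] nn[of "d + 1"] Suc.prems by (simp add: add_pos_nonneg)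
    next
      case F2: False
      hence "U \<sigma> n (d + 1) > 0" using False Suc by (intro Suc.IH) auto
      thus ?thesis using nn[of d] nn[of "d - 1"] Suc.prems
        by (simp add: add_nonneg_pos)
    qed
  qed
qed

lemma sum_shift_int: "(\<Sum>d\<in>{a..b}. f (d + c)) = (\<Sum>d\<in>{a + c..b + c}. f d)" for a b c :: int
proof -
  have "(\<Sum>d\<in>{a..b}. f (d + c)) = sum f ((\<lambda>d. d + c) ` {a..b})"
    by (subst sum.reindex) (auto simp: inj_on_def)
  thus ?thesis by simp
qed

lemma zsum_shift:
  assumes "\<And>d. d \<notin> Zw n \<Longrightarrow> f d = 0" and "\<bar>c\<bar> \<le> 1"
  shows "(\<Sum>d\<in>Zw (Suc n). f (d + c)) = sum f (Zw n)"
proof -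
  have "(\<Sum>d\<in>Zw (Suc n). f (d + c)) = sum f {- int (Suc n) + c .. int (Suc n) + c}"
    unfolding Zw_def by (rule sum_shift_int)
  also have "\<dots> = sum f (Zw n)"
    by (rule sum.mono_neutral_right) (use assms in \<open>auto simp: Zw_def\<close>)
  finally show ?thesis .
qed

lemma zsum_ext:
  assumes "\<And>d. d \<notin> Zw n \<Longrightarrow> f d = 0" and "n \<le> m"
  shows "sum f (Zw m) = sum f (Zw n)"
  by (rule sum.mono_neutral_right) (use assms in \<open>auto simp: Zw_def\<close>)

lemma U_total: "sum (U \<sigma> n) (Zw n) = (2 + \<sigma>) ^ n"
proof (induction n)
  case 0
  have "Zw 0 = {0}" by (auto simp: Zw_def)
  thus ?case by simp
next
  case (Suc n)
  have s1: "(\<Sum>d\<in>Zw (Suc n). U \<sigma> n (d + c)) = sum (U \<sigma> n) (Zw n)" if "\<bar>c\<bar> \<le> 1" for c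
    by (rule zsum_shift) (use that U_supp' in auto)
  have "sum (U \<sigma> (Suc n)) (Zw (Suc n)) =
        (\<Sum>d\<in>Zw (Suc n). U \<sigma> n (d + -1)) + \<sigma> * (\<Sum>d\<in>Zw (Suc n). U \<sigma> n (d + 0)) + (\<Sum>d\<in>Zw (Suc n). U \<sigma> n (d + 1))"
    by (simp add: sum.distrib sum_distrib_left)
  also have "\<dots> = (2 + \<sigma>) * sum (U \<sigma> n) (Zw n)"
    by (simp only: s1) (simp add: algebra_simps)
  finally show ?case using Suc by simp
qed

lemma U_conv: "U \<sigma> (a + b) d = (\<Sum>j\<in>Zw a. U \<sigma> a j * U \<sigma> b (d - j))"
proof (induction b arbitrary: d)
  case 0
  have "(\<Sum>j\<in>Zw a. U \<sigma> a j * U \<sigma> 0 (d - j)) = (\<Sum>j\<in>Zw a. if j = d then U \<sigma> a j else 0)"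
    by (intro sum.cong) auto
  also have "\<dots> = U \<sigma> a d" using U_supp'[of d a] by auto
  finally show ?case by simp
next
  case (Suc b)
  have "U \<sigma> (a + Suc b) d = U \<sigma> (a + b) (d - 1) + \<sigma> * U \<sigma> (a + b) d + U \<sigma> (a + b) (d + 1)" by simp
  also have "\<dots> = (\<Sum>j\<in>Zw a. U \<sigma> a j * U \<sigma> (Suc b) (d - j))"
    unfolding Suc.IH by (simp add: sum.distrib sum_distrib_left algebra_simps)
  finally show ?case .
qed

lemma U_conv0: "U \<sigma> (a + b) 0 = (\<Sum>j\<in>Zw a. U \<sigma> a j * U \<sigma> b j)"
  using U_conv[of \<sigma> a b 0] U_sym[of \<sigma> b] by simp

lemma sum_reindex_le:
  fixes g :: "'a \<Rightarrow> real"
  assumes nn: "\<And>x. g x \<ge> 0" and supp: "\<And>x. x \<notin> S \<Longrightarrow> g x = 0" and fS: "finite S"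
    and inj: "inj_on h A" and fA: "finite A"
  shows "(\<Sum>j\<in>A. g (h j)) \<le> sum g S"
proof -
  have "(\<Sum>j\<in>A. g (h j)) = sum g (h ` A)" using inj by (simp add: sum.reindex)
  also have "\<dots> = sum g (h ` A \<inter> S)"
    by (rule sum.mono_neutral_right) (use fA supp in auto)
  also have "\<dots> \<le> sum g S" using fS nn by (intro sum_mono2) auto
  finally show ?thesis .
qed

lemma ab_le: "(a::real) * b \<le> (a ^ 2 + b ^ 2) / 2"
proof -
  have "0 \<le> (a - b) ^ 2" by simp
  hence "2 * (a * b) \<le> a ^ 2 + b ^ 2" unfolding power2_diff by (simp add: mult.assoc)
  thus ?thesis by (simp add: field_simps)
qed

lemma U_CS1: "\<sigma> \<ge> 0 \<Longrightarrow> U \<sigma> (M + M) d \<le> U \<sigma> (M + M) 0"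
proof -
  assume s: "\<sigma> \<ge> 0"
  let ?u = "U \<sigma> M"
  have "U \<sigma> (M + M) d = (\<Sum>j\<in>Zw M. ?u j * ?u (d - j))" by (rule U_conv)
  also have "\<dots> \<le> (\<Sum>j\<in>Zw M. (?u j ^ 2 + ?u (d - j) ^ 2) / 2)"
    by (intro sum_mono ab_le)
  also have "\<dots> = (\<Sum>j\<in>Zw M. ?u j ^ 2) / 2 + (\<Sum>j\<in>Zw M. ?u (d - j) ^ 2) / 2"
    by (simp add: sum.distrib sum_divide_distrib[symmetric] add_divide_distrib)
  also have "(\<Sum>j\<in>Zw M. ?u (d - j) ^ 2) \<le> (\<Sum>j\<in>Zw M. ?u j ^ 2)"
    using sum_reindex_le[of "\<lambda>x. ?u x ^ 2" "Zw M" "\<lambda>j. d - j" "Zw M"] U_supp'[of _ M \<sigma>]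
    by (auto simp: inj_on_def)
  also have "(\<Sum>j\<in>Zw M. ?u j ^ 2) = U \<sigma> (M + M) 0"
    by (simp add: U_conv0 power2_eq_square)
  finally show ?thesis by simp
qed

declare U.simps(2)[simp del]


context
  fixes \<sigma> :: real
  assumes sp: "\<sigma> > 0"
begin

definition xs :: "nat \<Rightarrow> real" where
  "xs M = U \<sigma> (M + M) 0 / (2 + \<sigma>) ^ (M + M)"

lemma U0_pos: "U \<sigma> n 0 > 0" using U_pos[OF sp, of 0 n] by simp

lemma U_le_total: "U \<sigma> n d \<le> (2 + \<sigma>) ^ n"
proof (cases "d \<in> Zw n")
  case True
  have "U \<sigma> n d \<le> sum (U \<sigma> n) (Zw n)"
    using True U_nonneg sp by (intro member_le_sum) auto
  thus ?thesis by (simp add: U_total)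
next
  case False thus ?thesis using U_supp' sp by simp
qed

lemma xs_pos: "xs M > 0" unfolding xs_def using U0_pos sp by simp

lemma xs_le1: "xs M \<le> 1" unfolding xs_def using U_le_total[of "M + M" 0] sp by simp

lemma xs_lb: "xs M \<ge> 1 / (2 * real M + 1)"
proof -
  have cs: "(\<Sum>j\<in>Zw M. U \<sigma> M j) ^ 2 \<le> (\<Sum>j\<in>Zw M. (U \<sigma> M j) ^ 2) * real (card (Zw M))"
    using Cauchy_Schwarz_ineq_sum[of "U \<sigma> M" "\<lambda>_. 1" "Zw M"] by simp
  have e: "(\<Sum>j\<in>Zw M. (U \<sigma> M j) ^ 2) = U \<sigma> (M + M) 0" by (simp add: U_conv0 power2_eq_square)
  have "((2 + \<sigma>) ^ M) ^ 2 \<le> U \<sigma> (M + M) 0 * (2 * real M + 1)"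
    using cs unfolding e U_total card_Zw by (simp add: add.commute)
  hence "(2 + \<sigma>) ^ (M + M) \<le> U \<sigma> (M + M) 0 * (2 * real M + 1)"
    by (simp add: power_add power2_eq_square)
  thus ?thesis unfolding xs_def using sp by (simp add: field_simps)
qed

lemma U_LC: "U \<sigma> (M + M + 2) 0 ^ 2 \<le> U \<sigma> (M + M) 0 * U \<sigma> (M + M + 4) 0"
proof -
  have i2: "M + (M + 2) = M + M + 2" by simp
  have "U \<sigma> (M + M + 2) 0 = (\<Sum>j\<in>Zw M. U \<sigma> M j * U \<sigma> (M + 2) j)"
    using U_conv0[of \<sigma> M "M + 2"] unfolding i2 .
  hence A: "U \<sigma> (M + M + 2) 0 ^ 2 \<le> (\<Sum>j\<in>Zw M. (U \<sigma> M j) ^ 2) * (\<Sum>j\<in>Zw M. (U \<sigma> (M + 2) j) ^ 2)"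
    using Cauchy_Schwarz_ineq_sum by metis
  have B: "(\<Sum>j\<in>Zw M. (U \<sigma> M j) ^ 2) = U \<sigma> (M + M) 0"
    by (simp add: U_conv0 power2_eq_square)
  have C: "(\<Sum>j\<in>Zw M. (U \<sigma> (M + 2) j) ^ 2) \<le> (\<Sum>j\<in>Zw (M + 2). (U \<sigma> (M + 2) j) ^ 2)"
    by (intro sum_mono2) (auto simp: Zw_def)
  have i: "M + 2 + (M + 2) = M + M + 4" by simp
  have D: "(\<Sum>j\<in>Zw (M + 2). (U \<sigma> (M + 2) j) ^ 2) = U \<sigma> (M + M + 4) 0"
    using U_conv0[of \<sigma> "M + 2" "M + 2"] unfolding i power2_eq_square by (rule sym)
  have "U \<sigma> (M + M) 0 * (\<Sum>j\<in>Zw M. (U \<sigma> (M + 2) j) ^ 2) \<le> U \<sigma> (M + M) 0 * U \<sigma> (M + M + 4) 0"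
    using C D U0_pos[of "M + M"] by (intro mult_left_mono) auto
  thus ?thesis using A B by simp
qed

lemma xs_LC: "xs (Suc M) ^ 2 \<le> xs M * xs (Suc (Suc M))"
proof -
  let ?l = "2 + \<sigma>"
  have l: "?l > 0" using sp by simp
  have ia: "Suc M + Suc M = M + M + 2" by simp
  have ib: "Suc (Suc M) + Suc (Suc M) = M + M + 4" by simp
  have a: "xs (Suc M) = U \<sigma> (M + M + 2) 0 / ?l ^ (M + M + 2)"
    unfolding xs_def ia by (rule refl)
  have b: "xs (Suc (Suc M)) = U \<sigma> (M + M + 4) 0 / ?l ^ (M + M + 4)"
    unfolding xs_def ib by (rule refl)
  have c: "(?l ^ (M + M + 2)) ^ 2 = ?l ^ (M + M) * ?l ^ (M + M + 4)"
  proof -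
    have "(?l ^ (M + M + 2)) ^ 2 = ?l ^ ((M + M + 2) * 2)" by (rule power_mult[symmetric])
    also have "(M + M + 2) * 2 = (M + M) + (M + M + 4)" by simp
    finally show ?thesis by (rule trans[OF _ power_add])
  qed
  have "xs (Suc M) ^ 2 = U \<sigma> (M + M + 2) 0 ^ 2 / (?l ^ (M + M) * ?l ^ (M + M + 4))"
    unfolding a c[symmetric] by (simp add: power_divide)
  also have "\<dots> \<le> U \<sigma> (M + M) 0 * U \<sigma> (M + M + 4) 0 / (?l ^ (M + M) * ?l ^ (M + M + 4))"
    using U_LC l by (intro divide_right_mono) auto
  also have "\<dots> = xs M * xs (Suc (Suc M))"
    unfolding xs_def ib by (rule times_divide_times_eq[symmetric])
  finally show ?thesis .
qed

definition rr :: "nat \<Rightarrow> real" where "rr M = xs (Suc M) / xs M"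

lemma rr_pos: "rr M > 0" unfolding rr_def using xs_pos by simp

lemma rr_mono: "rr M \<le> rr (Suc M)"
proof -
  have "xs (Suc M) * xs (Suc M) \<le> xs M * xs (Suc (Suc M))" using xs_LC by (simp add: power2_eq_square)
  thus ?thesis unfolding rr_def using xs_pos[of M] xs_pos[of "Suc M"]
    by (simp add: divide_simps) (simp add: mult.commute)
qed

lemma rr_incseq: "incseq rr" using rr_mono by (simp add: incseq_SucI)

lemma xs_geom: "xs (M0 + n) \<ge> xs M0 * rr M0 ^ n"
proof (induction n)
  case 0 thus ?case by simp
next
  case (Suc n)
  have "xs (M0 + Suc n) = rr (M0 + n) * xs (M0 + n)" unfolding rr_def using xs_pos[of "M0 + n"] by simp
  also have "\<dots> \<ge> rr M0 * (xs M0 * rr M0 ^ n)"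
    using rr_incseq[THEN incseqD, of M0 "M0 + n"] Suc rr_pos xs_pos
    by (intro mult_mono) (auto intro: less_imp_le mult_nonneg_nonneg)
  finally show ?case by (simp add: mult_ac)
qed

lemma rr_le1: "rr M \<le> 1"
proof (rule ccontr)
  assume "\<not> rr M \<le> 1"
  hence "1 < rr M" by simp
  then obtain n where n: "1 / xs M < rr M ^ n" using real_arch_pow by blast
  have "xs M * rr M ^ n > 1" using n xs_pos[of M] by (simp add: field_simps)
  hence "xs (M + n) > 1" using xs_geom[of M n] by simp
  thus False using xs_le1[of "M + n"] by simp
qed

lemma xs_upper: "(\<forall>i. rr i \<le> q) \<Longrightarrow> xs M \<le> xs 0 * q ^ M"
proof (induction M)
  case 0 thus ?case by simp
next
  case (Suc M)
  have "rr 0 \<le> q" using Suc.prems by blast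
  hence q0: "q \<ge> 0" using rr_pos[of 0] by linarith
  have "xs (Suc M) = rr M * xs M" unfolding rr_def using xs_pos[of M] by simp
  also have "\<dots> \<le> q * (xs 0 * q ^ M)"
    using Suc rr_pos xs_pos q0 by (intro mult_mono) (auto intro: less_imp_le)
  finally show ?case by (simp add: mult_ac)
qed

lemma rr_lim: "rr \<longlonglongrightarrow> 1"
proof -
  have bdd: "bdd_above (range rr)" using rr_le1 by (intro bdd_aboveI[of _ 1]) auto
  let ?s = "SUP i. rr i"
  have lim: "rr \<longlonglongrightarrow> ?s" by (rule LIMSEQ_incseq_SUP[OF bdd rr_incseq])
  have le: "rr i \<le> ?s" for i using bdd by (intro cSUP_upper) auto
  have s1: "?s \<le> 1" using rr_le1 by (intro cSUP_least) auto
  have s0: "?s > 0" using le[of 0] rr_pos[of 0] by simp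
  have "?s = 1"
  proof (rule ccontr)
    assume "?s \<noteq> 1"
    hence q1: "?s < 1" using s1 by simp
    have up: "xs M \<le> xs 0 * ?s ^ M" for M using xs_upper le by blast
    have t1: "(\<lambda>n. of_nat n * ?s ^ n) \<longlonglongrightarrow> 0" using q1 s0 by (intro powser_times_n_limit_0) simp
    have t2: "(\<lambda>n. ?s ^ n) \<longlonglongrightarrow> 0" using q1 s0 by (intro LIMSEQ_power_zero) simp
    have "(\<lambda>n. xs 0 * ((2 * (of_nat n * ?s ^ n) + ?s ^ n))) \<longlonglongrightarrow> xs 0 * (2 * 0 + 0)"
      by (intro tendsto_intros t1 t2)
    hence "eventually (\<lambda>n. xs 0 * ((2 * (of_nat n * ?s ^ n) + ?s ^ n)) < 1) sequentially"
      by (intro order_tendstoD) auto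
    then obtain n where n: "xs 0 * ((2 * (of_nat n * ?s ^ n) + ?s ^ n)) < 1"
      by (auto simp: eventually_sequentially)
    have "1 / (2 * real n + 1) \<le> xs 0 * ?s ^ n" using xs_lb[of n] up[of n] by simp
    hence "1 \<le> xs 0 * ?s ^ n * (2 * real n + 1)" by (simp add: field_simps)
    also have "\<dots> = xs 0 * ((2 * (of_nat n * ?s ^ n) + ?s ^ n))" by (simp add: algebra_simps)
    finally show False using n by simp
  qed
  thus ?thesis using lim by simp
qed

lemma xs_ratio: "(\<lambda>M. xs (M + k) / xs M) \<longlonglongrightarrow> 1"
proof (induction k)
  case 0
  have "xs M / xs M = 1" for M using xs_pos[of M] by simp
  thus ?case by simp
next
  case (Suc k)
  have eq: "xs (M + Suc k) / xs M = rr (M + k) * (xs (M + k) / xs M)" for M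
    unfolding rr_def using xs_pos[of M] xs_pos[of "M + k"] by simp
  have "(\<lambda>M. rr (M + k)) \<longlonglongrightarrow> 1" using rr_lim by (rule LIMSEQ_ignore_initial_segment)
  hence "(\<lambda>M. rr (M + k) * (xs (M + k) / xs M)) \<longlonglongrightarrow> 1 * 1" by (intro tendsto_mult Suc)
  thus ?case unfolding eq by simp
qed

end

lemma seq_even_odd:
  fixes f :: "nat \<Rightarrow> real"
  assumes e: "(\<lambda>M. f (M + M)) \<longlonglongrightarrow> l" and o: "(\<lambda>M. f (Suc (M + M))) \<longlonglongrightarrow> l"
  shows "f \<longlonglongrightarrow> l"
proof (rule LIMSEQ_I)
  fix r :: real assume r: "r > 0"
  obtain n1 where n1: "\<And>n. n \<ge> n1 \<Longrightarrow> norm (f (n + n) - l) < r" using LIMSEQ_D[OF e r] by blast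
  obtain n2 where n2: "\<And>n. n \<ge> n2 \<Longrightarrow> norm (f (Suc (n + n)) - l) < r" using LIMSEQ_D[OF o r] by blast
  show "\<exists>no. \<forall>n\<ge>no. norm (f n - l) < r"
  proof (intro exI allI impI)
    fix n assume n: "n \<ge> 2 * (n1 + n2)"
    let ?m = "n div 2"
    have m: "?m \<ge> n1" "?m \<ge> n2" using n by auto
    show "norm (f n - l) < r"
    proof (cases "even n")
      case True
      hence "n = ?m + ?m" by auto
      thus ?thesis using n1[OF m(1)] by metis
    next
      case False
      hence "n = Suc (?m + ?m)" by presburger
      thus ?thesis using n2[OF m(2)] by metis
    qed
  qed
qed

context
  fixes \<sigma> :: real
  assumes sp: "\<sigma> > 0"
begin

lemma U_even_ratio: "(\<lambda>M. U \<sigma> (M + M) d / U \<sigma> (M + M) 0) \<longlonglongrightarrow> 1"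
proof -
  define k where "k = nat \<bar>d\<bar>"
  let ?L = "(2 + \<sigma>) ^ (k + k)"
  have dk: "d \<in> Zw (k + k)" unfolding k_def Zw_iff by simp
  have w: "U \<sigma> (k + k) d > 0" using U_pos[OF sp] dk by (simp add: Zw_iff)
  have A0: "U \<sigma> (M + M) 0 > 0" for M using U0_pos[OF sp] .
  have key: "U \<sigma> (k + k) d * (U \<sigma> (M + M) 0 - U \<sigma> (M + M) d) \<le> ?L * U \<sigma> (M + M) 0 - U \<sigma> (k + k + (M + M)) 0" for M
  proof -
    have "U \<sigma> (k + k) d * (U \<sigma> (M + M) 0 - U \<sigma> (M + M) d)
          \<le> (\<Sum>j\<in>Zw (k + k). U \<sigma> (k + k) j * (U \<sigma> (M + M) 0 - U \<sigma> (M + M) j))"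
      using dk U_nonneg[of \<sigma>] sp U_CS1[of \<sigma> M]
      by (intro member_le_sum[where f = "\<lambda>j. U \<sigma> (k + k) j * (U \<sigma> (M + M) 0 - U \<sigma> (M + M) j)"])
         (auto intro!: mult_nonneg_nonneg)
    also have "\<dots> = U \<sigma> (M + M) 0 * sum (U \<sigma> (k + k)) (Zw (k + k)) - (\<Sum>j\<in>Zw (k + k). U \<sigma> (k + k) j * U \<sigma> (M + M) j)"
      by (simp add: algebra_simps sum_subtractf sum_distrib_left)
    also have "\<dots> = ?L * U \<sigma> (M + M) 0 - U \<sigma> (k + k + (M + M)) 0"
      by (simp add: U_total U_conv0 mult.commute)
    finally show ?thesis .
  qed
  have Ceq: "U \<sigma> (k + k + (M + M)) 0 = ?L * U \<sigma> (M + M) 0 * (xs \<sigma> (M + k) / xs \<sigma> M)" for M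
  proof -
    have i: "M + k + (M + k) = k + k + (M + M)" by simp
    have "xs \<sigma> (M + k) / xs \<sigma> M = U \<sigma> (k + k + (M + M)) 0 / (2 + \<sigma>) ^ (k + k + (M + M)) / (U \<sigma> (M + M) 0 / (2 + \<sigma>) ^ (M + M))"
      unfolding xs_def[OF sp] i by (rule refl)
    also have "\<dots> = U \<sigma> (k + k + (M + M)) 0 / (?L * U \<sigma> (M + M) 0)"
      using A0[of M] sp by (simp add: power_add field_simps)
    finally show ?thesis using A0[of M] sp by (simp add: field_simps)
  qed
  define g where "g M = ?L * (1 - xs \<sigma> (M + k) / xs \<sigma> M) / U \<sigma> (k + k) d" for M
  have g: "g \<longlonglongrightarrow> ?L * (1 - 1) / U \<sigma> (k + k) d"
    unfolding g_def by (intro tendsto_intros xs_ratio[OF sp]) (use w in simp)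
  have up: "U \<sigma> (M + M) d / U \<sigma> (M + M) 0 \<le> 1" for M
    using U_CS1[OF less_imp_le[OF sp], of M d] A0[of M] by simp
  have lo: "1 - g M \<le> U \<sigma> (M + M) d / U \<sigma> (M + M) 0" for M
  proof -
    have "U \<sigma> (k + k) d * (U \<sigma> (M + M) 0 - U \<sigma> (M + M) d) \<le> ?L * U \<sigma> (M + M) 0 * (1 - xs \<sigma> (M + k) / xs \<sigma> M)"
      using key[of M] Ceq[of M] by (simp add: algebra_simps)
    hence "(U \<sigma> (M + M) 0 - U \<sigma> (M + M) d) / U \<sigma> (M + M) 0 \<le> g M"
      unfolding g_def using w A0[of M] by (simp add: field_simps)
    hence "1 - U \<sigma> (M + M) d / U \<sigma> (M + M) 0 \<le> g M" using A0[of M] by (simp add: diff_divide_distrib)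
    thus ?thesis by simp
  qed
  have "(\<lambda>M. 1 - g M) \<longlonglongrightarrow> 1 - ?L * (1 - 1) / U \<sigma> (k + k) d" by (intro tendsto_intros g)
  hence l1: "(\<lambda>M. 1 - g M) \<longlonglongrightarrow> 1" by simp
  show ?thesis by (rule tendsto_sandwich[OF _ _ l1 tendsto_const]) (use lo up in auto)
qed

lemma U_odd_aux: "(\<lambda>M. U \<sigma> (Suc (M + M)) d / U \<sigma> (M + M) 0) \<longlonglongrightarrow> 2 + \<sigma>"
proof -
  have eq: "U \<sigma> (Suc (M + M)) d / U \<sigma> (M + M) 0 =
    U \<sigma> (M + M) (d - 1) / U \<sigma> (M + M) 0 + \<sigma> * (U \<sigma> (M + M) d / U \<sigma> (M + M) 0) + U \<sigma> (M + M) (d + 1) / U \<sigma> (M + M) 0" for M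
    by (simp add: U.simps(2) add_divide_distrib)
  have "(\<lambda>M. U \<sigma> (M + M) (d - 1) / U \<sigma> (M + M) 0 + \<sigma> * (U \<sigma> (M + M) d / U \<sigma> (M + M) 0) + U \<sigma> (M + M) (d + 1) / U \<sigma> (M + M) 0)
        \<longlonglongrightarrow> 1 + \<sigma> * 1 + 1"
    by (intro tendsto_intros U_even_ratio)
  thus ?thesis unfolding eq by simp
qed

lemma U_ratio: "(\<lambda>N. U \<sigma> N d / U \<sigma> N 0) \<longlonglongrightarrow> 1"
proof (rule seq_even_odd)
  show "(\<lambda>M. U \<sigma> (M + M) d / U \<sigma> (M + M) 0) \<longlonglongrightarrow> 1" by (rule U_even_ratio)
next
  have eq: "U \<sigma> (Suc (M + M)) d / U \<sigma> (Suc (M + M)) 0 =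
      (U \<sigma> (Suc (M + M)) d / U \<sigma> (M + M) 0) / (U \<sigma> (Suc (M + M)) 0 / U \<sigma> (M + M) 0)" for M
    using U0_pos[OF sp, of "M + M"] by simp
  have "(\<lambda>M. (U \<sigma> (Suc (M + M)) d / U \<sigma> (M + M) 0) / (U \<sigma> (Suc (M + M)) 0 / U \<sigma> (M + M) 0))
        \<longlonglongrightarrow> (2 + \<sigma>) / (2 + \<sigma>)"
    using sp by (intro tendsto_divide U_odd_aux) auto
  thus "(\<lambda>M. U \<sigma> (Suc (M + M)) d / U \<sigma> (Suc (M + M)) 0) \<longlonglongrightarrow> 1"
    unfolding eq using sp by simp
qed

lemma U_step: "(\<lambda>N. U \<sigma> (Suc N) 0 / U \<sigma> N 0) \<longlonglongrightarrow> 2 + \<sigma>"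
proof -
  have eq: "U \<sigma> (Suc N) 0 / U \<sigma> N 0 = U \<sigma> N (-1) / U \<sigma> N 0 + \<sigma> + U \<sigma> N 1 / U \<sigma> N 0" for N
    using U0_pos[OF sp, of N] by (simp add: U.simps(2) add_divide_distrib)
  have "(\<lambda>N. U \<sigma> N (-1) / U \<sigma> N 0 + \<sigma> + U \<sigma> N 1 / U \<sigma> N 0) \<longlonglongrightarrow> 1 + \<sigma> + 1"
    by (intro tendsto_intros U_ratio)
  thus ?thesis unfolding eq by simp
qed

lemma U_bound: "U \<sigma> N d \<le> ((2 + \<sigma>) / \<sigma>) * U \<sigma> N 0"
proof -
  have B1: "(2 + \<sigma>) / \<sigma> \<ge> 1" using sp by simp
  have ev: "U \<sigma> (M + M) e \<le> U \<sigma> (M + M) 0" for M e using U_CS1[OF less_imp_le[OF sp]] .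
  show ?thesis
  proof (cases "even N")
    case True
    then obtain M where N: "N = M + M" by (metis mult_2 evenE)
    have "U \<sigma> N d \<le> 1 * U \<sigma> N 0" using ev N by simp
    also have "\<dots> \<le> ((2 + \<sigma>) / \<sigma>) * U \<sigma> N 0"
      using B1 U0_pos[OF sp, of N] by (intro mult_right_mono) auto
    finally show ?thesis .
  next
    case False
    then obtain M where N: "N = Suc (M + M)" by (metis oddE mult_2 add.commute plus_1_eq_Suc)
    have "U \<sigma> N d = U \<sigma> (M + M) (d - 1) + \<sigma> * U \<sigma> (M + M) d + U \<sigma> (M + M) (d + 1)"
      unfolding N by (simp add: U.simps(2))
    also have "\<dots> \<le> (2 + \<sigma>) * U \<sigma> (M + M) 0"
    proof -
      have "\<sigma> * U \<sigma> (M + M) d \<le> \<sigma> * U \<sigma> (M + M) 0" using ev[of M d] sp by (intro mult_left_mono) auto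
      thus ?thesis using ev[of M "d - 1"] ev[of M "d + 1"] by (simp add: algebra_simps)
    qed
    also have "\<dots> = ((2 + \<sigma>) / \<sigma>) * (\<sigma> * U \<sigma> (M + M) 0)" using sp by simp
    also have "\<sigma> * U \<sigma> (M + M) 0 \<le> U \<sigma> N 0"
      unfolding N using U_nonneg[of \<sigma>] sp by (simp add: U.simps(2))
    hence "((2 + \<sigma>) / \<sigma>) * (\<sigma> * U \<sigma> (M + M) 0) \<le> ((2 + \<sigma>) / \<sigma>) * U \<sigma> N 0"
      using sp by (intro mult_left_mono) auto
    finally show ?thesis .
  qed
qed

end

lemma Top_add: "Top \<sigma> (\<lambda>j. f j + g j) i = Top \<sigma> f i + Top \<sigma> g i"
  unfolding Top_def by (simp add: algebra_simps)

lemma Top_cmult: "Top \<sigma> (\<lambda>j. c * f j) i = c * Top \<sigma> f i"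
  unfolding Top_def by (simp add: algebra_simps)

lemma Top_mono: "\<sigma> \<ge> 0 \<Longrightarrow> (\<And>j. f j \<le> g j) \<Longrightarrow> Top \<sigma> f i \<le> Top \<sigma> g i"
  unfolding Top_def by (intro add_mono mult_left_mono) auto

lemma Tp_add: "Tp \<sigma> n (\<lambda>j. f j + g j) i = Tp \<sigma> n f i + Tp \<sigma> n g i"
proof (induction n arbitrary: i)
  case 0 thus ?case by simp
next
  case (Suc n)
  have "Tp \<sigma> n (\<lambda>j. f j + g j) = (\<lambda>i. Tp \<sigma> n f i + Tp \<sigma> n g i)" using Suc by (intro ext) simp
  thus ?case by (simp add: Top_add)
qed

lemma Tp_cmult: "Tp \<sigma> n (\<lambda>j. c * f j) i = c * Tp \<sigma> n f i"
proof (induction n arbitrary: i)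
  case 0 thus ?case by simp
next
  case (Suc n)
  have "Tp \<sigma> n (\<lambda>j. c * f j) = (\<lambda>i. c * Tp \<sigma> n f i)" using Suc by (intro ext) simp
  thus ?case by (simp add: Top_cmult)
qed

lemma Tp_mono: "\<sigma> \<ge> 0 \<Longrightarrow> (\<And>j. f j \<le> g j) \<Longrightarrow> Tp \<sigma> n f i \<le> Tp \<sigma> n g i"
proof (induction n arbitrary: i)
  case 0 thus ?case by simp
next
  case (Suc n)
  show ?case using Suc by (simp add: Top_mono)
qed

lemma Tp_zero: "Tp \<sigma> n (\<lambda>j. 0) i = 0"
  using Tp_cmult[of \<sigma> n 0 "\<lambda>j. 0" i] by simp

lemma Tp_nonneg: "\<sigma> \<ge> 0 \<Longrightarrow> (\<And>j. f j \<ge> 0) \<Longrightarrow> Tp \<sigma> n f i \<ge> 0"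
  using Tp_mono[of \<sigma> "\<lambda>j. 0" f n i] Tp_zero by simp

lemma Tp_diff: "Tp \<sigma> n (\<lambda>j. f j - g j) i = Tp \<sigma> n f i - Tp \<sigma> n g i"
  using Tp_add[of \<sigma> n "\<lambda>j. f j - g j" g i] by simp

lemma Tp_abs: "\<sigma> \<ge> 0 \<Longrightarrow> (\<And>j. \<bar>f j\<bar> \<le> g j) \<Longrightarrow> \<bar>Tp \<sigma> n f i\<bar> \<le> Tp \<sigma> n g i"
proof -
  assume s: "\<sigma> \<ge> 0" and b: "\<And>j. \<bar>f j\<bar> \<le> g j"
  have 1: "Tp \<sigma> n f i \<le> Tp \<sigma> n g i" using b by (intro Tp_mono[OF s]) (metis abs_le_D1)
  have nb: "(-1) * g j \<le> f j" for j using b[of j] abs_le_D2 minus_le_iff by (metis mult_minus1)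
  have "Tp \<sigma> n (\<lambda>j. (-1) * g j) i \<le> Tp \<sigma> n f i" using nb by (intro Tp_mono[OF s])
  hence 2: "- Tp \<sigma> n g i \<le> Tp \<sigma> n f i" using Tp_cmult[of \<sigma> n "-1" g i] by simp
  show ?thesis using 1 2 by simp
qed

lemma Tp_eigen: "(\<And>i. Top \<sigma> f i = c * f i) \<Longrightarrow> Tp \<sigma> n f i = c ^ n * f i"
proof (induction n arbitrary: i)
  case 0 thus ?case by simp
next
  case (Suc n)
  have "Tp \<sigma> n f = (\<lambda>i. c ^ n * f i)" using Suc by (intro ext) simp
  thus ?case using Suc.prems by (simp add: Top_cmult)
qed

definition Phi :: "real \<Rightarrow> nat \<Rightarrow> nat \<Rightarrow> real" where
  "Phi \<sigma> L a = (\<Sum>i\<le>2 * a + 1. U \<sigma> L (int i - int a))"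

lemma Top_Phi: "Top \<sigma> (Phi \<sigma> L) a = Phi \<sigma> (Suc L) a"
proof -
  let ?A = "\<Sum>i\<le>2 * a + 1. U \<sigma> L (int i - int a - 1)"
  let ?C = "\<Sum>i\<le>2 * a + 1. U \<sigma> L (int i - int a + 1)"
  have S: "Phi \<sigma> (Suc L) a = ?A + \<sigma> * Phi \<sigma> L a + ?C"
    unfolding Phi_def U.simps(2) sum.distrib sum_distrib_left by (rule refl)
  have P1: "Phi \<sigma> L (a + 1) = ?A + U \<sigma> L (int a + 1) + U \<sigma> L (int a + 2)"
  proof -
    have "Phi \<sigma> L (a + 1) = (\<Sum>i\<le>Suc (Suc (2 * a + 1)). U \<sigma> L (int i - int a - 1))"
      unfolding Phi_def by (intro sum.cong) (auto simp: algebra_simps)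
    also have "\<dots> = ?A + U \<sigma> L (int a + 1) + U \<sigma> L (int a + 2)"
      by (simp add: algebra_simps)
    finally show ?thesis .
  qed
  show ?thesis
  proof (cases a)
    case 0
    have "?C = U \<sigma> L 1 + U \<sigma> L 2" using 0 by (simp add: numeral_2_eq_2)
    thus ?thesis using S P1 0 by (simp add: Top_def)
  next
    case (Suc b)
    have Pb: "Phi \<sigma> L (a - 1) = (\<Sum>i\<le>2 * b + 1. U \<sigma> L (int i - int a + 1))"
      unfolding Phi_def Suc by (intro sum.cong) auto
    have "?C = (\<Sum>i\<le>Suc (Suc (2 * b + 1)). U \<sigma> L (int i - int a + 1))"
      using Suc by (intro sum.cong) auto
    also have "\<dots> = Phi \<sigma> L (a - 1) + U \<sigma> L (int a + 1) + U \<sigma> L (int a + 2)"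
      unfolding Pb using Suc by (simp add: algebra_simps)
    finally show ?thesis using S P1 Suc by (simp add: Top_def)
  qed
qed

lemma Tp_one: "Tp \<sigma> L (\<lambda>_. 1) a = Phi \<sigma> L a"
proof (induction L arbitrary: a)
  case 0
  have "Phi \<sigma> 0 a = (\<Sum>i\<le>2 * a + 1. if i = a then 1 else 0)"
    unfolding Phi_def by (intro sum.cong) auto
  thus ?case by simp
next
  case (Suc L)
  have "Tp \<sigma> L (\<lambda>_. 1) = Phi \<sigma> L" using Suc by (intro ext) simp
  thus ?case by (simp add: Top_Phi)
qed

definition Psi :: "real \<Rightarrow> nat \<Rightarrow> nat \<Rightarrow> nat \<Rightarrow> real" where
  "Psi \<sigma> K L a = (\<Sum>j<K. U \<sigma> L (int j - int a) - U \<sigma> L (int j + int a + 2))"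

lemma Top_Psi: "Top \<sigma> (Psi \<sigma> K L) a = Psi \<sigma> K (Suc L) a"
proof (cases a)
  case 0
  have "Top \<sigma> (Psi \<sigma> K L) a = \<sigma> * Psi \<sigma> K L 0 + Psi \<sigma> K L 1" using 0 by (simp add: Top_def)
  also have "\<dots> = Psi \<sigma> K (Suc L) a"
    unfolding Psi_def 0 sum_distrib_left sum.distrib[symmetric]
    by (intro sum.cong refl) (simp add: U.simps(2) algebra_simps)
  finally show ?thesis .
next
  case (Suc b)
  have "Top \<sigma> (Psi \<sigma> K L) a = Psi \<sigma> K L b + \<sigma> * Psi \<sigma> K L a + Psi \<sigma> K L (a + 1)" using Suc by (simp add: Top_def)
  also have "\<dots> = Psi \<sigma> K (Suc L) a"
    unfolding Psi_def Suc sum_distrib_left sum.distrib[symmetric]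
    by (intro sum.cong refl) (simp add: U.simps(2) algebra_simps)
  finally show ?thesis .
qed

lemma Tp_ind: "Tp \<sigma> L (\<lambda>j. if j < K then 1 else 0) a = Psi \<sigma> K L a"
proof (induction L arbitrary: a)
  case 0
  have "Psi \<sigma> K 0 a = (\<Sum>j<K. if j = a then 1 else 0)"
    unfolding Psi_def by (intro sum.cong) auto
  thus ?case by simp
next
  case (Suc L)
  have "Tp \<sigma> L (\<lambda>j. if j < K then 1 else 0) = Psi \<sigma> K L" using Suc by (intro ext) simp
  thus ?case by (simp add: Top_Psi)
qed


lemma tann:
  fixes f :: "nat \<Rightarrow> nat \<Rightarrow> real"
  assumes lim: "\<And>a. (\<lambda>L. f L a) \<longlonglongrightarrow> g a" and bd: "\<And>L a. \<bar>f L a\<bar> \<le> M a" and sm: "summable M"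
  shows "(\<lambda>L. \<Sum>a. f L a) \<longlonglongrightarrow> (\<Sum>a. g a)"
proof -
  have "eventually (\<lambda>(k, n). norm (f n k) \<le> M k) (at_top \<times>\<^sub>F sequentially)"
    using bd by (intro always_eventually) (auto simp: case_prod_beta)
  from tannerys_theorem[where a = "\<lambda>k n. f n k" and b = g and M = M and F = sequentially, OF lim this sm]
  show ?thesis by simp
qed

locale gen =
  fixes c :: "nat \<Rightarrow> real" and F :: "nat \<Rightarrow> nat \<Rightarrow> real" and G h \<alpha> :: "nat \<Rightarrow> real"
    and \<kappa> lam :: real and R :: "nat \<Rightarrow> nat \<Rightarrow> nat \<Rightarrow> real"
  assumes c_pos: "\<And>L. c L > 0"
    and F_nn: "\<And>L a. F L a \<ge> 0"
    and F_lim: "\<And>a. (\<lambda>L. F L a / c L) \<longlonglongrightarrow> \<kappa> * h a"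
    and F_bd: "\<And>L a. F L a \<le> c L * G a"
    and G_sum: "summable (\<lambda>a. \<alpha> a * G a)"
    and \<alpha>_nn: "\<And>a. \<alpha> a \<ge> 0"
    and \<kappa>_pos: "\<kappa> > 0"
    and C_pos: "(\<Sum>a. \<alpha> a * h a) > 0"
    and c_step: "(\<lambda>L. c (Suc L) / c L) \<longlonglongrightarrow> lam"
    and lam_pos: "lam > 0"
    and R_nn: "\<And>K L a. R K L a \<ge> 0"
    and R_le: "\<And>K L a. R K L a \<le> F L a"
    and R_lim: "\<And>K a. (\<lambda>L. R K L a / c L) \<longlonglongrightarrow> 0"
begin

definition D :: "nat \<Rightarrow> real" where "D L = (\<Sum>a. \<alpha> a * F L a)"
definition C :: real where "C = (\<Sum>a. \<alpha> a * h a)"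

lemma h_nn: "h a \<ge> 0"
proof -
  have "\<forall>n\<ge>0. 0 \<le> F n a / c n" using F_nn c_pos by (simp add: less_imp_le)
  hence "\<exists>N. \<forall>n\<ge>N. 0 \<le> F n a / c n" by blast
  hence "\<kappa> * h a \<ge> 0" by (rule LIMSEQ_le_const[OF F_lim])
  thus ?thesis using \<kappa>_pos by (simp add: zero_le_mult_iff)
qed

lemma h_le: "\<kappa> * h a \<le> G a"
proof -
  have "\<forall>n\<ge>0. F n a / c n \<le> G a" using F_bd c_pos by (simp add: divide_le_eq mult.commute)
  hence "\<exists>N. \<forall>n\<ge>N. F n a / c n \<le> G a" by blast
  thus ?thesis by (rule LIMSEQ_le_const2[OF F_lim])
qed

lemma G_nn: "G a \<ge> 0" using h_le[of a] h_nn[of a] \<kappa>_pos by (meson order_trans zero_le_mult_iff less_imp_le)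

lemma sum_h: "summable (\<lambda>a. \<alpha> a * h a)"
proof (rule summable_comparison_test[OF _ summable_mult[OF G_sum, of "1 / \<kappa>"]])
  show "\<exists>N. \<forall>n\<ge>N. norm (\<alpha> n * h n) \<le> 1 / \<kappa> * (\<alpha> n * G n)"
  proof (intro exI allI impI)
    fix n
    have "h n \<le> G n / \<kappa>" using h_le[of n] \<kappa>_pos by (simp add: field_simps)
    hence "\<alpha> n * h n \<le> \<alpha> n * (G n / \<kappa>)" using \<alpha>_nn by (intro mult_left_mono) auto
    thus "norm (\<alpha> n * h n) \<le> 1 / \<kappa> * (\<alpha> n * G n)" using \<alpha>_nn[of n] h_nn[of n] by (simp add: field_simps)
  qed
qed

lemma sum_F: "summable (\<lambda>a. \<alpha> a * F L a)"
proof (rule summable_comparison_test[OF _ summable_mult[OF G_sum, of "c L"]])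
  show "\<exists>N. \<forall>n\<ge>N. norm (\<alpha> n * F L n) \<le> c L * (\<alpha> n * G n)"
  proof (intro exI allI impI)
    fix n
    have "\<alpha> n * F L n \<le> \<alpha> n * (c L * G n)" using F_bd \<alpha>_nn by (intro mult_left_mono) auto
    thus "norm (\<alpha> n * F L n) \<le> c L * (\<alpha> n * G n)" using \<alpha>_nn[of n] F_nn[of L n] by (simp add: mult_ac)
  qed
qed

lemma tann_c:
  assumes Q_nn: "\<And>L a. Q L a \<ge> 0" and Q_le: "\<And>L a. Q L a \<le> F L a"
    and Q_lim: "\<And>a. (\<lambda>L. Q L a / c L) \<longlonglongrightarrow> q a"
  shows "(\<lambda>L. (\<Sum>a. \<alpha> a * Q L a) / c L) \<longlonglongrightarrow> (\<Sum>a. \<alpha> a * q a)"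
proof -
  have sQ: "summable (\<lambda>a. \<alpha> a * Q L a)" for L
    by (rule summable_comparison_test[OF _ sum_F[of L]])
       (use Q_nn Q_le \<alpha>_nn in \<open>auto intro!: mult_left_mono\<close>)
  have eq: "(\<Sum>a. \<alpha> a * Q L a) / c L = (\<Sum>a. \<alpha> a * Q L a / c L)" for L
    using suminf_divide[OF sQ[of L], of "c L"] by simp
  have "(\<lambda>L. \<Sum>a. \<alpha> a * Q L a / c L) \<longlonglongrightarrow> (\<Sum>a. \<alpha> a * q a)"
  proof (rule tann[OF _ _ G_sum])
    fix a show "(\<lambda>L. \<alpha> a * Q L a / c L) \<longlonglongrightarrow> \<alpha> a * q a"
      using tendsto_mult[OF tendsto_const Q_lim[of a], of "\<alpha> a"] by simp
  next
    fix L a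
    have "Q L a / c L \<le> G a" using Q_le[of L a] F_bd[of L a] c_pos[of L] by (simp add: divide_le_eq mult.commute)
    hence "\<alpha> a * (Q L a / c L) \<le> \<alpha> a * G a" using \<alpha>_nn by (intro mult_left_mono) auto
    moreover have "0 \<le> \<alpha> a * (Q L a / c L)" using \<alpha>_nn Q_nn c_pos by (intro mult_nonneg_nonneg divide_nonneg_pos) auto
    ultimately show "\<bar>\<alpha> a * Q L a / c L\<bar> \<le> \<alpha> a * G a" by simp
  qed
  thus ?thesis unfolding eq .
qed

lemma D_lim: "(\<lambda>L. D L / c L) \<longlonglongrightarrow> \<kappa> * C"
proof -
  have "(\<lambda>L. D L / c L) \<longlonglongrightarrow> (\<Sum>a. \<alpha> a * (\<kappa> * h a))"
    unfolding D_def by (rule tann_c[OF F_nn order_refl F_lim])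
  moreover have "(\<Sum>a. \<alpha> a * (\<kappa> * h a)) = \<kappa> * C"
    unfolding C_def using suminf_mult[OF sum_h, of \<kappa>] by (simp add: mult_ac)
  ultimately show ?thesis by simp
qed

lemma Cpos': "C > 0" using C_pos unfolding C_def .

lemma cD_lim: "(\<lambda>L. c L / D L) \<longlonglongrightarrow> inverse (\<kappa> * C)"
proof -
  have "(\<lambda>L. inverse (D L / c L)) \<longlonglongrightarrow> inverse (\<kappa> * C)"
    using Cpos' \<kappa>_pos by (intro tendsto_inverse D_lim) auto
  thus ?thesis by simp
qed

lemma c_ratio: "(\<lambda>M. c (M + K) / c M) \<longlonglongrightarrow> lam ^ K"
proof (induction K)
  case 0
  have "c M / c M = 1" for M using c_pos[of M] by simp
  thus ?case by simp
next
  case (Suc K)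
  have eq: "c (M + Suc K) / c M = c (Suc (M + K)) / c (M + K) * (c (M + K) / c M)" for M
    using c_pos[of "M + K"] by simp
  have "(\<lambda>M. c (Suc (M + K)) / c (M + K)) \<longlonglongrightarrow> lam"
    using LIMSEQ_ignore_initial_segment[OF c_step, of K] by simp
  hence "(\<lambda>M. c (Suc (M + K)) / c (M + K) * (c (M + K) / c M)) \<longlonglongrightarrow> lam * lam ^ K"
    by (intro tendsto_mult Suc)
  thus ?case unfolding eq by simp
qed

lemma shift_lim:
  assumes Q: "(\<lambda>M. Q M / c M) \<longlonglongrightarrow> q"
  shows "(\<lambda>M. Q M / D (M + K)) \<longlonglongrightarrow> q / (lam ^ K * (\<kappa> * C))"
proof -
  have eq: "Q M / D (M + K) = (Q M / c M) * inverse (c (M + K) / c M) * (c (M + K) / D (M + K))" for M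
    using c_pos[of M] c_pos[of "M + K"] by (simp add: field_simps)
  have cD: "(\<lambda>M. c (M + K) / D (M + K)) \<longlonglongrightarrow> inverse (\<kappa> * C)"
    using LIMSEQ_ignore_initial_segment[OF cD_lim, of K] .
  have "(\<lambda>M. (Q M / c M) * inverse (c (M + K) / c M) * (c (M + K) / D (M + K)))
        \<longlonglongrightarrow> q * inverse (lam ^ K) * inverse (\<kappa> * C)"
    using lam_pos by (intro tendsto_mult tendsto_inverse Q c_ratio cD) auto
  thus ?thesis unfolding eq by (simp add: field_simps)
qed

lemma R_sum_lim: "(\<lambda>L. (\<Sum>a. \<alpha> a * R K L a) / D L) \<longlonglongrightarrow> 0"
proof -
  have A: "(\<lambda>L. (\<Sum>a. \<alpha> a * R K L a) / c L) \<longlonglongrightarrow> (\<Sum>a. \<alpha> a * 0)"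
    by (rule tann_c[OF R_nn R_le R_lim])
  have eq: "(\<Sum>a. \<alpha> a * R K L a) / D L = ((\<Sum>a. \<alpha> a * R K L a) / c L) * (c L / D L)" for L
    using c_pos[of L] by (simp add: field_simps)
  have "(\<lambda>L. ((\<Sum>a. \<alpha> a * R K L a) / c L) * (c L / D L)) \<longlonglongrightarrow> 0 * inverse (\<kappa> * C)"
    using A by (intro tendsto_mult cD_lim) simp
  thus ?thesis unfolding eq by simp
qed

end

lemma summable_alpha:
  fixes \<alpha> :: "nat \<Rightarrow> real"
  assumes a: "\<And>n. \<alpha> n \<ge> 0" and r: "\<rho> \<ge> 1" and s: "summable (\<lambda>m. real m * \<alpha> m * \<rho> ^ m)"
  shows "summable (\<lambda>m. \<alpha> m * \<rho> ^ m)" "summable (\<lambda>m. \<alpha> m * (real m + 1) * \<rho> ^ m)"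
proof -
  show s1: "summable (\<lambda>m. \<alpha> m * \<rho> ^ m)"
  proof (rule summable_comparison_test[OF _ s])
    show "\<exists>N. \<forall>n\<ge>N. norm (\<alpha> n * \<rho> ^ n) \<le> real n * \<alpha> n * \<rho> ^ n"
    proof (intro exI[of _ 1] allI impI)
      fix n :: nat assume n: "n \<ge> 1"
      have p: "\<rho> ^ n \<ge> 0" using r by simp
      have q: "0 \<le> \<alpha> n * \<rho> ^ n" using a[of n] p by simp
      have "1 * (\<alpha> n * \<rho> ^ n) \<le> real n * (\<alpha> n * \<rho> ^ n)"
        using n q by (intro mult_right_mono) auto
      hence "\<alpha> n * \<rho> ^ n \<le> real n * (\<alpha> n * \<rho> ^ n)" by simp
      thus "norm (\<alpha> n * \<rho> ^ n) \<le> real n * \<alpha> n * \<rho> ^ n" using a[of n] p by (simp add: mult_ac)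
    qed
  qed
  have "summable (\<lambda>m. real m * \<alpha> m * \<rho> ^ m + \<alpha> m * \<rho> ^ m)" by (rule summable_add[OF s s1])
  thus "summable (\<lambda>m. \<alpha> m * (real m + 1) * \<rho> ^ m)" by (simp add: algebra_simps)
qed

lemma hfun1: "hfun 1 n = real n + 1" by (simp add: hfun_def)

lemma hfun_pos: "\<rho> \<ge> 1 \<Longrightarrow> hfun \<rho> n > 0"
proof -
  assume r: "\<rho> \<ge> 1"
  show ?thesis
  proof (cases "\<rho> = 1")
    case True thus ?thesis by (simp add: hfun_def)
  next
    case False
    hence r1: "\<rho> > 1" using r by simp
    have i: "inverse \<rho> < 1" using r1 by (simp add: inverse_less_1_iff)
    have i0: "inverse \<rho> > 0" using r1 by simp
    have "inverse \<rho> ^ Suc n < 1" using i i0 by (intro power_Suc_less_one)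
    hence "inverse \<rho> ^ (n + 1) < 1" by simp
    moreover have "1 < \<rho> ^ (n + 1)" using r1 by (intro one_less_power) auto
    moreover have "inverse \<rho> < \<rho>" using i r1 by simp
    ultimately show ?thesis using False by (simp add: hfun_def)
  qed
qed

lemma C_pos_lemma:
  fixes \<alpha> :: "nat \<Rightarrow> real"
  assumes a: "\<And>n. \<alpha> n \<ge> 0" and a0: "\<exists>n. \<alpha> n \<noteq> 0" and r: "\<rho> \<ge> 1"
    and sm: "summable (\<lambda>n. \<alpha> n * hfun \<rho> n)"
  shows "(\<Sum>n. \<alpha> n * hfun \<rho> n) > 0"
proof -
  obtain i where "\<alpha> i \<noteq> 0" using a0 by blast
  hence "\<alpha> i > 0" using a[of i] by simp
  hence "\<alpha> i * hfun \<rho> i > 0" using hfun_pos[OF r] by simp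
  moreover have "0 \<le> \<alpha> n * hfun \<rho> n" for n using a[of n] hfun_pos[OF r, of n] by simp
  ultimately show ?thesis using sm by (intro suminf_pos2[where i = i]) auto
qed

lemma case_one:
  fixes \<alpha> :: "nat \<Rightarrow> real"
  assumes sp: "\<sigma> > 0" and a: "\<And>n. \<alpha> n \<ge> 0" and a0: "\<exists>n. \<alpha> n \<noteq> 0"
    and s: "summable (\<lambda>m. real m * \<alpha> m * 1 ^ m)"
  shows "gen (\<lambda>L. U \<sigma> L 0) (\<lambda>L a. Tp \<sigma> L (\<lambda>n. 1 ^ n) a) (\<lambda>a. 2 * (real a + 1) * ((2 + \<sigma>) / \<sigma>))
          (hfun 1) \<alpha> 2 (1 + 1 / 1 + \<sigma>) (\<lambda>K L a. Tp \<sigma> L (\<lambda>j. if j < K then 1 else 0) a)"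
proof -
  have F: "Tp \<sigma> L (\<lambda>n. 1 ^ n) a = Phi \<sigma> L a" for L a by (simp add: Tp_one)
  have s2: "summable (\<lambda>m. \<alpha> m * (real m + 1))"
    using summable_alpha(2)[OF a _ s] by simp
  show ?thesis
  proof (unfold_locales, unfold F)
    fix L show "U \<sigma> L 0 > 0" using U0_pos[OF sp] .
  next
    fix L a show "Phi \<sigma> L a \<ge> 0" unfolding Phi_def using U_nonneg sp by (intro sum_nonneg) auto
  next
    fix a
    have "(\<lambda>L. \<Sum>i\<le>2 * a + 1. U \<sigma> L (int i - int a) / U \<sigma> L 0) \<longlonglongrightarrow> (\<Sum>i\<le>2 * a + 1. 1)"
      by (intro tendsto_sum U_ratio[OF sp])
    moreover have "(\<Sum>i\<le>2 * a + 1. U \<sigma> L (int i - int a) / U \<sigma> L 0) = Phi \<sigma> L a / U \<sigma> L 0" for L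
      unfolding Phi_def sum_divide_distrib by (rule refl)
    ultimately show "(\<lambda>L. Phi \<sigma> L a / U \<sigma> L 0) \<longlonglongrightarrow> 2 * hfun 1 a" by (simp add: hfun1 add.commute)
  next
    fix L a
    have "Phi \<sigma> L a \<le> (\<Sum>i\<le>2 * a + 1. (2 + \<sigma>) / \<sigma> * U \<sigma> L 0)"
      unfolding Phi_def by (intro sum_mono U_bound[OF sp])
    also have "\<dots> = U \<sigma> L 0 * (2 * (real a + 1) * ((2 + \<sigma>) / \<sigma>))" using sp by (simp add: field_simps)
    finally show "Phi \<sigma> L a \<le> U \<sigma> L 0 * (2 * (real a + 1) * ((2 + \<sigma>) / \<sigma>))" .
  next
    show "summable (\<lambda>a. \<alpha> a * (2 * (real a + 1) * ((2 + \<sigma>) / \<sigma>)))"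
    proof -
      have "(\<lambda>a. \<alpha> a * (2 * (real a + 1) * ((2 + \<sigma>) / \<sigma>))) = (\<lambda>a. (2 * ((2 + \<sigma>) / \<sigma>)) * (\<alpha> a * (real a + 1)))"
        by (rule ext) (simp only: mult_ac)
      thus ?thesis using summable_mult[OF s2, of "2 * ((2 + \<sigma>) / \<sigma>)"] by simp
    qed
  next
    fix a show "\<alpha> a \<ge> 0" by (rule a)
  next
    show "(0::real) < 2" by simp
  next
    show "(\<Sum>a. \<alpha> a * hfun 1 a) > 0"
      by (rule C_pos_lemma[OF a a0]) (use s2 in \<open>simp_all add: hfun1\<close>)
  next
    show "(\<lambda>L. U \<sigma> (Suc L) 0 / U \<sigma> L 0) \<longlonglongrightarrow> 1 + 1 / 1 + \<sigma>" using U_step[OF sp] by simp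
  next
    show "(0::real) < 1 + 1 / 1 + \<sigma>" using sp by simp
  next
    fix K L a show "Tp \<sigma> L (\<lambda>j. if j < K then 1 else 0) a \<ge> 0"
      using sp by (intro Tp_nonneg) auto
  next
    fix K L a show "Tp \<sigma> L (\<lambda>j. if j < K then 1 else 0) a \<le> Phi \<sigma> L a"
      unfolding Tp_one[symmetric] using sp by (intro Tp_mono) auto
  next
    fix K a
    have "(\<lambda>L. \<Sum>j<K. U \<sigma> L (int j - int a) / U \<sigma> L 0 - U \<sigma> L (int j + int a + 2) / U \<sigma> L 0) \<longlonglongrightarrow> (\<Sum>j<K. 1 - 1)"
      by (intro tendsto_sum tendsto_diff U_ratio[OF sp])
    moreover have "(\<Sum>j<K. U \<sigma> L (int j - int a) / U \<sigma> L 0 - U \<sigma> L (int j + int a + 2) / U \<sigma> L 0)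
        = Tp \<sigma> L (\<lambda>j. if j < K then 1 else 0) a / U \<sigma> L 0" for L
      unfolding Tp_ind Psi_def by (simp add: sum_divide_distrib diff_divide_distrib)
    ultimately show "(\<lambda>L. Tp \<sigma> L (\<lambda>j. if j < K then 1 else 0) a / U \<sigma> L 0) \<longlonglongrightarrow> 0" by simp
  qed
qed


lemma Tp_le_eigen:
  assumes s: "\<sigma> \<ge> 0" and c: "c \<ge> 0" and t: "\<And>i. Top \<sigma> f i \<le> c * f i"
  shows "Tp \<sigma> n f i \<le> c ^ n * f i"
proof (induction n arbitrary: i)
  case 0 thus ?case by simp
next
  case (Suc n)
  have "Tp \<sigma> (Suc n) f i = Top \<sigma> (Tp \<sigma> n f) i" by simp
  also have "\<dots> \<le> Top \<sigma> (\<lambda>j. c ^ n * f j) i" using Suc by (intro Top_mono[OF s])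
  also have "\<dots> = c ^ n * Top \<sigma> f i" by (rule Top_cmult)
  also have "\<dots> \<le> c ^ n * (c * f i)" using t c by (intro mult_left_mono) auto
  finally show ?case by (simp add: mult_ac)
qed

lemma Top_h1: "Top \<sigma> (\<lambda>n. real n + 1) i = (2 + \<sigma>) * (real i + 1)"
  unfolding Top_def by (cases i) (auto simp: algebra_simps)

lemma Tp_h1: "Tp \<sigma> n (\<lambda>n. real n + 1) i = (2 + \<sigma>) ^ n * (real i + 1)"
  by (rule Tp_eigen) (rule Top_h1)

definition qq :: "real \<Rightarrow> real" where "qq \<rho> = inverse \<rho>"
definition lamr :: "real \<Rightarrow> real \<Rightarrow> real" where "lamr \<rho> \<sigma> = \<rho> + 1 / \<rho> + \<sigma>"

context
  fixes \<rho> \<sigma> :: real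
  assumes r1: "\<rho> > 1" and sp: "\<sigma> > 0"
begin

lemma rq: "\<rho> * qq \<rho> = 1" unfolding qq_def using r1 by simp
lemma qq_pos: "qq \<rho> > 0" unfolding qq_def using r1 by simp
lemma qq_lt: "qq \<rho> < \<rho>" unfolding qq_def using r1 by (meson inverse_less_1_iff less_trans)

lemma h_eq: "hfun \<rho> n = (\<rho> ^ (n + 1) - qq \<rho> ^ (n + 1)) / (\<rho> - qq \<rho>)"
  unfolding hfun_def qq_def using r1 by simp

lemma Top_hfun: "Top \<sigma> (hfun \<rho>) i = lamr \<rho> \<sigma> * hfun \<rho> i"
proof -
  have d: "\<rho> - qq \<rho> \<noteq> 0" using qq_lt by simp
  have lq: "lamr \<rho> \<sigma> = \<rho> + qq \<rho> + \<sigma>" unfolding lamr_def qq_def by (simp add: divide_inverse)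
  have key: "(\<rho> + qq \<rho>) * (\<rho> * A - qq \<rho> * B) = (A - B) + (\<rho> * \<rho> * A - qq \<rho> * qq \<rho> * B)" for A B
  proof -
    have "(\<rho> + qq \<rho>) * (\<rho> * A - qq \<rho> * B) = \<rho> * \<rho> * A - (\<rho> * qq \<rho>) * B + (\<rho> * qq \<rho>) * A - qq \<rho> * qq \<rho> * B"
      by (simp add: algebra_simps)
    thus ?thesis unfolding rq by simp
  qed
  show ?thesis
  proof (cases i)
    case 0
    have h0: "hfun \<rho> 0 = 1" unfolding h_eq using d by simp
    have h1: "hfun \<rho> 1 = \<rho> + qq \<rho>"
    proof -
      have "\<rho> * \<rho> - qq \<rho> * qq \<rho> = (\<rho> + qq \<rho>) * (\<rho> - qq \<rho>)" by (simp add: algebra_simps)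
      thus ?thesis unfolding h_eq using d by simp
    qed
    have "Top \<sigma> (hfun \<rho>) i = \<sigma> * hfun \<rho> 0 + hfun \<rho> 1" using 0 by (simp add: Top_def)
    thus ?thesis using 0 lq h0 h1 by simp
  next
    case (Suc j)
    let ?A = "\<rho> ^ Suc j" and ?B = "qq \<rho> ^ Suc j"
    have "Top \<sigma> (hfun \<rho>) i = hfun \<rho> j + \<sigma> * hfun \<rho> (Suc j) + hfun \<rho> (Suc (Suc j))"
      using Suc by (simp add: Top_def)
    also have "hfun \<rho> j + hfun \<rho> (Suc (Suc j)) = (\<rho> + qq \<rho>) * hfun \<rho> (Suc j)"
    proof -
      have "hfun \<rho> j + hfun \<rho> (Suc (Suc j)) = ((?A - ?B) + (\<rho> * \<rho> * ?A - qq \<rho> * qq \<rho> * ?B)) / (\<rho> - qq \<rho>)"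
        unfolding h_eq by (simp add: add_divide_distrib[symmetric] algebra_simps)
      also have "\<dots> = (\<rho> + qq \<rho>) * ((\<rho> * ?A - qq \<rho> * ?B) / (\<rho> - qq \<rho>))" unfolding key[symmetric] by simp
      also have "(\<rho> * ?A - qq \<rho> * ?B) / (\<rho> - qq \<rho>) = hfun \<rho> (Suc j)" unfolding h_eq by simp
      finally show ?thesis .
    qed
    hence "hfun \<rho> j + \<sigma> * hfun \<rho> (Suc j) + hfun \<rho> (Suc (Suc j)) = (\<rho> + qq \<rho> + \<sigma>) * hfun \<rho> (Suc j)"
      by (simp add: algebra_simps)
    finally show ?thesis using Suc lq by simp
  qed
qed

lemma lam_gt: "lamr \<rho> \<sigma> > 2 + \<sigma>"
proof -
  have "0 < (\<rho> - 1) ^ 2" using r1 by simp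
  hence "2 * \<rho> < \<rho> * \<rho> + 1" by (simp add: power2_eq_square algebra_simps)
  hence "2 < \<rho> + 1 / \<rho>" using r1 by (simp add: field_simps)
  thus ?thesis unfolding lamr_def by simp
qed

lemma beta_dec: "\<rho> ^ n = ((\<rho> - qq \<rho>) / \<rho>) * hfun \<rho> n + (1 / \<rho>) * qq \<rho> ^ (n + 1)"
proof -
  have d: "\<rho> - qq \<rho> \<noteq> 0" using qq_lt by simp
  have "((\<rho> - qq \<rho>) / \<rho>) * hfun \<rho> n = (\<rho> ^ (n + 1) - qq \<rho> ^ (n + 1)) / \<rho>"
    unfolding h_eq using d by simp
  thus ?thesis using r1 by (simp add: field_simps)
qed

lemma F_decomp: "Tp \<sigma> L (\<lambda>n. \<rho> ^ n) a = ((\<rho> - qq \<rho>) / \<rho>) * (lamr \<rho> \<sigma> ^ L * hfun \<rho> a) + (1 / \<rho>) * Tp \<sigma> L (\<lambda>n. qq \<rho> ^ (n + 1)) a"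
proof -
  have "Tp \<sigma> L (\<lambda>n. \<rho> ^ n) a = Tp \<sigma> L (\<lambda>n. ((\<rho> - qq \<rho>) / \<rho>) * hfun \<rho> n + (1 / \<rho>) * qq \<rho> ^ (n + 1)) a"
    using beta_dec by simp
  also have "\<dots> = ((\<rho> - qq \<rho>) / \<rho>) * Tp \<sigma> L (hfun \<rho>) a + (1 / \<rho>) * Tp \<sigma> L (\<lambda>n. qq \<rho> ^ (n + 1)) a"
    by (simp only: Tp_add Tp_cmult)
  also have "Tp \<sigma> L (hfun \<rho>) a = lamr \<rho> \<sigma> ^ L * hfun \<rho> a" by (rule Tp_eigen) (rule Top_hfun)
  finally show ?thesis .
qed

lemma g2_bounds: "0 \<le> Tp \<sigma> L (\<lambda>n. qq \<rho> ^ (n + 1)) a \<and> Tp \<sigma> L (\<lambda>n. qq \<rho> ^ (n + 1)) a \<le> (2 + \<sigma>) ^ L * (real a + 1)"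
proof
  show "0 \<le> Tp \<sigma> L (\<lambda>n. qq \<rho> ^ (n + 1)) a" using sp qq_pos by (intro Tp_nonneg) auto
next
  have q1: "qq \<rho> ^ (n + 1) \<le> real n + 1" for n
  proof -
    have "qq \<rho> ^ (n + 1) \<le> 1" using qq_pos qq_lt unfolding qq_def using r1
      by (intro power_le_one) (auto simp: inverse_le_1_iff)
    thus ?thesis by simp
  qed
  have "Tp \<sigma> L (\<lambda>n. qq \<rho> ^ (n + 1)) a \<le> Tp \<sigma> L (\<lambda>n. real n + 1) a" using sp q1 by (intro Tp_mono) auto
  thus "Tp \<sigma> L (\<lambda>n. qq \<rho> ^ (n + 1)) a \<le> (2 + \<sigma>) ^ L * (real a + 1)" by (simp add: Tp_h1)
qed

lemma vanish: "(\<lambda>L. (2 + \<sigma>) ^ L * B / lamr \<rho> \<sigma> ^ L) \<longlonglongrightarrow> 0"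
proof -
  have l0: "lamr \<rho> \<sigma> > 0" using lam_gt sp by simp
  have "(\<lambda>L. ((2 + \<sigma>) / lamr \<rho> \<sigma>) ^ L * B) \<longlonglongrightarrow> 0 * B"
    using lam_gt sp l0 by (intro tendsto_mult tendsto_const LIMSEQ_power_zero) (simp add: field_simps)
  thus ?thesis by (simp add: power_divide field_simps)
qed

lemma squeeze0: "(\<And>L. 0 \<le> f L) \<Longrightarrow> (\<And>L. f L \<le> (2 + \<sigma>) ^ L * B / lamr \<rho> \<sigma> ^ L) \<Longrightarrow> f \<longlonglongrightarrow> 0"
  by (rule tendsto_sandwich[OF _ _ tendsto_const vanish[of B]]) auto

end

lemma case_gt:
  fixes \<alpha> :: "nat \<Rightarrow> real"
  assumes sp: "\<sigma> > 0" and r1: "\<rho> > 1" and a: "\<And>n. \<alpha> n \<ge> 0" and a0: "\<exists>n. \<alpha> n \<noteq> 0"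
    and s: "summable (\<lambda>m. real m * \<alpha> m * \<rho> ^ m)"
  shows "gen (\<lambda>L. (\<rho> + 1 / \<rho> + \<sigma>) ^ L) (\<lambda>L a. Tp \<sigma> L (\<lambda>n. \<rho> ^ n) a) (\<lambda>a. \<rho> ^ a)
          (hfun \<rho>) \<alpha> ((\<rho> - inverse \<rho>) / \<rho>) (\<rho> + 1 / \<rho> + \<sigma>) (\<lambda>K L a. Tp \<sigma> L (\<lambda>j. if j < K then 1 else 0) a)"
proof -
  let ?l = "\<rho> + 1 / \<rho> + \<sigma>"
  have lr: "lamr \<rho> \<sigma> = ?l" unfolding lamr_def by (rule refl)
  have qr: "qq \<rho> = inverse \<rho>" unfolding qq_def by (rule refl)
  have l0: "?l > 0" using r1 sp by (simp add: add_pos_pos)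
  have sA: "summable (\<lambda>m. \<alpha> m * \<rho> ^ m)" using summable_alpha(1)[OF a _ s] r1 by simp
  have bnd: "Tp \<sigma> L (\<lambda>n. \<rho> ^ n) a \<le> ?l ^ L * \<rho> ^ a" for L a
  proof (rule Tp_le_eigen)
    show "\<sigma> \<ge> 0" "?l \<ge> 0" using sp l0 by auto
  next
    fix i
    show "Top \<sigma> (\<lambda>n. \<rho> ^ n) i \<le> ?l * \<rho> ^ i"
    proof (cases i)
      case 0 thus ?thesis using r1 by (simp add: Top_def)
    next
      case (Suc j)
      have "Top \<sigma> (\<lambda>n. \<rho> ^ n) i = \<rho> ^ j + \<sigma> * \<rho> ^ Suc j + \<rho> ^ Suc (Suc j)" using Suc by (simp add: Top_def)
      also have "\<dots> = ?l * \<rho> ^ i" using Suc r1 by (simp add: field_simps)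
      finally show ?thesis by simp
    qed
  qed
  have hle: "hfun \<rho> n \<le> \<rho> / (\<rho> - inverse \<rho>) * \<rho> ^ n" for n
  proof -
    have d: "\<rho> - qq \<rho> > 0" using qq_lt[OF r1 sp] by simp
    have "hfun \<rho> n = (\<rho> ^ (n + 1) - qq \<rho> ^ (n + 1)) / (\<rho> - qq \<rho>)" by (rule h_eq[OF r1 sp])
    also have "\<dots> \<le> \<rho> ^ (n + 1) / (\<rho> - qq \<rho>)" using d qq_pos[OF r1 sp] by (intro divide_right_mono) auto
    also have "\<dots> = \<rho> / (\<rho> - inverse \<rho>) * \<rho> ^ n" using qr by simp
    finally show ?thesis .
  qed
  have sH: "summable (\<lambda>n. \<alpha> n * hfun \<rho> n)"
  proof (rule summable_comparison_test[OF _ summable_mult[OF sA, of "\<rho> / (\<rho> - inverse \<rho>)"]])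
    show "\<exists>N. \<forall>n\<ge>N. norm (\<alpha> n * hfun \<rho> n) \<le> \<rho> / (\<rho> - inverse \<rho>) * (\<alpha> n * \<rho> ^ n)"
    proof (intro exI allI impI)
      fix n
      have "\<alpha> n * hfun \<rho> n \<le> \<alpha> n * (\<rho> / (\<rho> - inverse \<rho>) * \<rho> ^ n)" using hle a by (intro mult_left_mono) auto
      moreover have "0 \<le> \<alpha> n * hfun \<rho> n" using a[of n] hfun_pos[of \<rho> n] r1 by simp
      ultimately show "norm (\<alpha> n * hfun \<rho> n) \<le> \<rho> / (\<rho> - inverse \<rho>) * (\<alpha> n * \<rho> ^ n)" by (simp add: mult_ac)
    qed
  qed
  show ?thesis
  proof (unfold_locales)
    fix L show "?l ^ L > 0" using l0 by simp
  next
    fix L a show "Tp \<sigma> L (\<lambda>n. \<rho> ^ n) a \<ge> 0" using sp r1 by (intro Tp_nonneg) auto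
  next
    fix a
    have eq: "Tp \<sigma> L (\<lambda>n. \<rho> ^ n) a / ?l ^ L = (\<rho> - inverse \<rho>) / \<rho> * hfun \<rho> a + (1 / \<rho>) * (Tp \<sigma> L (\<lambda>n. qq \<rho> ^ (n + 1)) a / ?l ^ L)" for L
      unfolding F_decomp[OF r1 sp] lr qr using l0 by (simp add: field_simps)
    have z: "(\<lambda>L. Tp \<sigma> L (\<lambda>n. qq \<rho> ^ (n + 1)) a / ?l ^ L) \<longlonglongrightarrow> 0"
      using g2_bounds[OF r1 sp] l0 unfolding lr[symmetric]
      by (intro squeeze0[OF r1 sp, where B = "real a + 1"]) (auto intro: divide_nonneg_pos divide_right_mono)
    have "(\<lambda>L. (\<rho> - inverse \<rho>) / \<rho> * hfun \<rho> a + (1 / \<rho>) * (Tp \<sigma> L (\<lambda>n. qq \<rho> ^ (n + 1)) a / ?l ^ L))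
          \<longlonglongrightarrow> (\<rho> - inverse \<rho>) / \<rho> * hfun \<rho> a + (1 / \<rho>) * 0"
      by (intro tendsto_intros z)
    thus "(\<lambda>L. Tp \<sigma> L (\<lambda>n. \<rho> ^ n) a / ?l ^ L) \<longlonglongrightarrow> (\<rho> - inverse \<rho>) / \<rho> * hfun \<rho> a"
      unfolding eq by simp
  next
    fix L a show "Tp \<sigma> L (\<lambda>n. \<rho> ^ n) a \<le> ?l ^ L * \<rho> ^ a" by (rule bnd)
  next
    show "summable (\<lambda>a. \<alpha> a * \<rho> ^ a)" by (rule sA)
  next
    fix a show "\<alpha> a \<ge> 0" by (rule a)
  next
    show "(\<rho> - inverse \<rho>) / \<rho> > 0" using qq_lt[OF r1 sp] qr r1 by simp
  next
    show "(\<Sum>a. \<alpha> a * hfun \<rho> a) > 0" by (rule C_pos_lemma[OF a a0 _ sH]) (use r1 in simp)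
  next
    show "(\<lambda>L. ?l ^ Suc L / ?l ^ L) \<longlonglongrightarrow> ?l" using l0 by simp
  next
    show "?l > 0" by (rule l0)
  next
    fix K L a show "Tp \<sigma> L (\<lambda>j. if j < K then 1 else 0) a \<ge> 0" using sp by (intro Tp_nonneg) auto
  next
    fix K L a show "Tp \<sigma> L (\<lambda>j. if j < K then 1 else 0) a \<le> Tp \<sigma> L (\<lambda>n. \<rho> ^ n) a"
      using sp r1 by (intro Tp_mono) auto
  next
    fix K a
    show "(\<lambda>L. Tp \<sigma> L (\<lambda>j. if j < K then 1 else 0) a / ?l ^ L) \<longlonglongrightarrow> 0"
    proof (rule squeeze0[OF r1 sp, where B = "real a + 1"])
      fix L
      show "0 \<le> Tp \<sigma> L (\<lambda>j. if j < K then 1 else 0) a / ?l ^ L" using sp l0 by (intro divide_nonneg_pos Tp_nonneg) auto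
      have "Tp \<sigma> L (\<lambda>j. if j < K then 1 else 0) a \<le> Tp \<sigma> L (\<lambda>n. real n + 1) a" using sp by (intro Tp_mono) auto
      thus "Tp \<sigma> L (\<lambda>j. if j < K then 1 else 0) a / ?l ^ L \<le> (2 + \<sigma>) ^ L * (real a + 1) / lamr \<rho> \<sigma> ^ L"
        unfolding lr Tp_h1 using l0 by (intro divide_right_mono) auto
    qed
  qed
qed


lemma stw_cases: "stw \<sigma> n m = (if m = n + 1 then 1 else if m = n then \<sigma> else if m + 1 = n then 1 else 0)"
  unfolding stw_def nbr_iff by auto

lemma Qker_eq:
  assumes r: "\<rho> \<ge> 1" and sp: "\<sigma> > 0"
  shows "Qker \<rho> \<sigma> n m = stw \<sigma> n m * hfun \<rho> m / (hfun \<rho> n * (\<rho> + 1 / \<rho> + \<sigma>))"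
proof -
  have hp: "hfun \<rho> k > 0" for k using hfun_pos[OF r] .
  have l0: "\<rho> + 1 / \<rho> + \<sigma> > 0" using r sp by (simp add: add_pos_pos)
  show ?thesis
  proof (cases "\<rho> = 1")
    case True
    have nz1: "real k + 1 \<noteq> 0" for k by (simp add: add_nonneg_eq_0_iff)
    have nz2: "2 + \<sigma> \<noteq> 0" using sp by simp
    have "stw \<sigma> n m * hfun \<rho> m / (hfun \<rho> n * (\<rho> + 1 / \<rho> + \<sigma>))
        = 1 / (2 + \<sigma>) * (stw \<sigma> n m * ((real m + 1) / (real n + 1)))"
      using True nz1[of n] nz2 by (simp add: hfun1 field_simps)
    also have "\<dots> = Qker \<rho> \<sigma> n m"
      unfolding Qker_def stw_cases using True nz1[of n] by (auto simp: add.commute)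
    finally show ?thesis by simp
  next
    case False
    hence r1: "\<rho> > 1" using r by simp
    have d: "\<rho> - inverse \<rho> \<noteq> 0" using qq_lt[OF r1 sp] by (simp add: qq_def)
    have hq: "hfun \<rho> k = (\<rho> ^ (k + 1) - inverse \<rho> ^ (k + 1)) / (\<rho> - inverse \<rho>)" for k
      using False by (simp add: hfun_def)
    have nz: "\<rho> ^ (k + 1) - inverse \<rho> ^ (k + 1) \<noteq> 0" for k
      using hp[of k] unfolding hq by auto
    have ratio: "hfun \<rho> m / hfun \<rho> n = (\<rho> ^ (m + 1) - inverse \<rho> ^ (m + 1)) / (\<rho> ^ (n + 1) - inverse \<rho> ^ (n + 1))"
      unfolding hq using d by simp
    have "stw \<sigma> n m * hfun \<rho> m / (hfun \<rho> n * (\<rho> + 1 / \<rho> + \<sigma>))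
        = 1 / (\<rho> + 1 / \<rho> + \<sigma>) * (stw \<sigma> n m * (hfun \<rho> m / hfun \<rho> n))"
      using hp[of n] l0 by (simp add: field_simps)
    also have "\<dots> = Qker \<rho> \<sigma> n m"
      unfolding ratio Qker_def stw_cases using False nz[of n]
      by (auto simp: add.commute)
    finally show ?thesis by simp
  qed
qed


lemma cyl_decomp:
  "Vr (wc \<sigma> K (K + M + K) z x) (K + M + K) \<beta> (z 0) =
     (\<Prod>t\<in>{1..K}. stw \<sigma> (z (t - 1)) (z t)) * Tp \<sigma> M (Vr (wy \<sigma> (\<lambda>t. x (K + 1 - t))) K \<beta>) (z K)"
proof -
  let ?L = "K + M + K"
  let ?w = "wc \<sigma> K ?L z x"
  have mid: "Vr (\<lambda>t. ?w (t + K)) M g = Tp \<sigma> M g" for g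
  proof -
    have "Vr (\<lambda>t. ?w (t + K)) M g = Vr (wT \<sigma>) M g"
    proof (rule Vr_cong)
      fix t assume t: "t \<in> {1..M}"
      show "?w (t + K) = wT \<sigma> t"
        using t by (intro ext) (simp add: wc_def Ccond_def wT_def)
    qed
    thus ?thesis by (simp add: Vr_wT)
  qed
  have fin: "Vr (\<lambda>t. ?w (t + M + K)) K \<beta> = Vr (wy \<sigma> (\<lambda>t. x (K + 1 - t))) K \<beta>"
  proof (rule Vr_cong)
    fix t assume t: "t \<in> {1..K}"
    have e: "K + M + K + 1 - (t + M + K) = K + 1 - t" using t by simp
    show "?w (t + M + K) = wy \<sigma> (\<lambda>t. x (K + 1 - t)) t"
      using t by (intro ext) (simp add: wc_def Ccond_def wy_def wT_def e)
  qed
  have fst: "Vr ?w K g (z 0) = Vr (wfst \<sigma> z) K g (z 0)" for g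
  proof -
    have "Vr ?w K g = Vr (wfst \<sigma> z) K g"
    proof (rule Vr_cong)
      fix t assume t: "t \<in> {1..K}"
      show "?w t = wfst \<sigma> z t"
        using t by (intro ext) (simp add: wc_def Ccond_def wfst_def)
    qed
    thus ?thesis by simp
  qed
  have "Vr ?w ?L \<beta> = Vr ?w K (Vr (\<lambda>t. ?w (t + K)) (M + K) \<beta>)"
    using Vr_add[of ?w K "M + K" \<beta>] by (simp add: add.assoc)
  also have "Vr (\<lambda>t. ?w (t + K)) (M + K) \<beta> = Vr (\<lambda>t. ?w (t + K)) M (Vr (\<lambda>t. ?w (t + M + K)) K \<beta>)"
    using Vr_add[of "\<lambda>t. ?w (t + K)" M K \<beta>] by (simp add: add.assoc)
  also have "\<dots> = Tp \<sigma> M (Vr (wy \<sigma> (\<lambda>t. x (K + 1 - t))) K \<beta>)" by (simp only: mid fin)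
  finally show ?thesis using fst first_seg by simp
qed

lemma alg1: "(b::real) \<noteq> 0 \<Longrightarrow> c \<noteq> 0 \<Longrightarrow> l \<noteq> 0 \<Longrightarrow>
  (S * b / (c * l ^ K)) * (w * d / (b * l)) = (S * w) * d / (c * l ^ Suc K)"
  by (simp add: field_simps)

lemma prod_Qker:
  assumes r: "\<rho> \<ge> 1" and sp: "\<sigma> > 0"
  shows "(\<Prod>k<K. Qker \<rho> \<sigma> (z k) (z (Suc k))) =
         (\<Prod>t\<in>{1..K}. stw \<sigma> (z (t - 1)) (z t)) * hfun \<rho> (z K) / (hfun \<rho> (z 0) * (\<rho> + 1 / \<rho> + \<sigma>) ^ K)"
proof (induction K)
  case 0 thus ?case using hfun_pos[OF r, of "z 0"] by simp
next
  case (Suc K)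
  have hp: "hfun \<rho> k > 0" for k using hfun_pos[OF r] .
  have l0: "\<rho> + 1 / \<rho> + \<sigma> > 0" using r sp by (simp add: add_pos_pos)
  let ?S = "\<Prod>t\<in>{1..K}. stw \<sigma> (z (t - 1)) (z t)"
  let ?w = "stw \<sigma> (z K) (z (Suc K))"
  let ?l = "\<rho> + 1 / \<rho> + \<sigma>"
  have "(\<Prod>k<Suc K. Qker \<rho> \<sigma> (z k) (z (Suc k))) = (\<Prod>k<K. Qker \<rho> \<sigma> (z k) (z (Suc k))) * Qker \<rho> \<sigma> (z K) (z (Suc K))"
    by (rule prod.lessThan_Suc)
  also have "\<dots> = (?S * hfun \<rho> (z K) / (hfun \<rho> (z 0) * ?l ^ K)) * (?w * hfun \<rho> (z (Suc K)) / (hfun \<rho> (z K) * ?l))"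
    by (simp only: Suc.IH Qker_eq[OF r sp, of "z K" "z (Suc K)"])
  also have "\<dots> = (?S * ?w) * hfun \<rho> (z (Suc K)) / (hfun \<rho> (z 0) * ?l ^ Suc K)"
    using hp[of "z K"] hp[of "z 0"] l0 by (intro alg1) auto
  also have "?S * ?w = (\<Prod>t\<in>{1..Suc K}. stw \<sigma> (z (t - 1)) (z t))" by (simp add: prod.cl_ivl_Suc)
  finally show ?case .
qed

lemma prod_xilaw:
  "(\<Prod>k\<in>{1..K}. xilaw \<rho> \<sigma> (x k)) = (\<Prod>t\<in>{1..K}. xf \<rho> \<sigma> (x (K + 1 - t))) / (\<rho> + 1 / \<rho> + \<sigma>) ^ K"
proof -
  have "(\<Prod>k\<in>{1..K}. xilaw \<rho> \<sigma> (x k)) = (\<Prod>k\<in>{1..K}. xf \<rho> \<sigma> (x k) / (\<rho> + 1 / \<rho> + \<sigma>))"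
    by (intro prod.cong) (auto simp: xilaw_def xf_def)
  also have "\<dots> = (\<Prod>k\<in>{1..K}. xf \<rho> \<sigma> (x k)) / (\<rho> + 1 / \<rho> + \<sigma>) ^ K"
    by (simp add: prod_dividef)
  also have "(\<Prod>k\<in>{1..K}. xf \<rho> \<sigma> (x k)) = (\<Prod>t\<in>{1..K}. xf \<rho> \<sigma> (x (K + 1 - t)))"
    by (subst prod.atLeastAtMost_rev) simp
  finally show ?thesis .
qed

lemma Tp_pos: "\<sigma> > 0 \<Longrightarrow> (\<And>j. f j > 0) \<Longrightarrow> Tp \<sigma> n f i > 0"
proof (induction n arbitrary: i)
  case 0 thus ?case by simp
next
  case (Suc n)
  have p: "Tp \<sigma> n f j > 0" for j using Suc by blast
  have "Top \<sigma> (Tp \<sigma> n f) i \<ge> \<sigma> * Tp \<sigma> n f i"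
    unfolding Top_def using p[of "i - 1"] p[of "i + 1"] by simp
  moreover have "\<sigma> * Tp \<sigma> n f i > 0" using p[of i] Suc.prems by simp
  ultimately show ?case by simp
qed


lemma alg2:
  fixes a s c k h0 hK C l :: real
  assumes "k > 0" "C > 0" "h0 > 0" "l > 0"
  shows "a * s * (c * (k * hK / (l ^ (K + K) * (k * C))) + 0) =
         a * h0 / C * (s * hK / (h0 * l ^ K)) * (c / l ^ K)"
  using assms by (simp add: field_simps power_add)

theorem theorem1p2:
  fixes \<sigma> \<rho>1 :: real and \<alpha> :: "nat \<Rightarrow> real"
  assumes "\<sigma> > 0" and "\<rho>1 \<ge> 1"
    and "\<forall>n. \<alpha> n \<ge> 0" and "\<exists>n. \<alpha> n \<noteq> 0"
    and "summable (\<lambda>m. real m * \<alpha> m * \<rho>1 ^ m)"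
  shows "\<not> (\<forall>\<epsilon>>0. \<exists>M::nat. \<forall>L\<ge>1.
             PrL \<alpha> (\<lambda>n. \<rho>1 ^ n) \<sigma> L (\<lambda>\<gamma>. \<gamma> L > M) \<le> \<epsilon>)
      \<and> (\<forall>(K::nat) (z::nat \<Rightarrow> nat) (x::nat \<Rightarrow> int).
           (\<lambda>L. PrL \<alpha> (\<lambda>n. \<rho>1 ^ n) \<sigma> L
                   (\<lambda>\<gamma>. (\<forall>k\<le>K. \<gamma> k = z k) \<and> (\<forall>k\<in>{1..K}. incr L \<gamma> k = x k)))
           \<longlonglongrightarrow> Z0law \<alpha> \<rho>1 (z 0) * (\<Prod>k<K. Qker \<rho>1 \<sigma> (z k) (z (Suc k)))
                 * (\<Prod>k\<in>{1..K}. xilaw \<rho>1 \<sigma> (x k)))"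
proof -
  have sp: "\<sigma> > 0" and r: "\<rho>1 \<ge> 1" and a: "\<And>n. \<alpha> n \<ge> 0" and a0: "\<exists>n. \<alpha> n \<noteq> 0"
    and s: "summable (\<lambda>m. real m * \<alpha> m * \<rho>1 ^ m)" using assms by auto
  let ?\<beta> = "\<lambda>n::nat. \<rho>1 ^ n"
  let ?lam = "\<rho>1 + 1 / \<rho>1 + \<sigma>"
  let ?F = "\<lambda>L a. Tp \<sigma> L ?\<beta> a"
  let ?R = "\<lambda>K L a. Tp \<sigma> L (\<lambda>j. if j < K then 1 else 0) a"
  have "\<exists>c G \<kappa>. gen c ?F G (hfun \<rho>1) \<alpha> \<kappa> ?lam ?R"
  proof (cases "\<rho>1 = 1")
    case True
    have g: "gen (\<lambda>L. U \<sigma> L 0) (\<lambda>L a. Tp \<sigma> L (\<lambda>n. 1 ^ n) a) (\<lambda>a. 2 * (real a + 1) * ((2 + \<sigma>) / \<sigma>))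
          (hfun 1) \<alpha> 2 (1 + 1 / 1 + \<sigma>) ?R"
      by (rule case_one[OF sp a a0]) (use s True in simp)
    show ?thesis unfolding True using g by blast
  next
    case False
    hence r1: "\<rho>1 > 1" using r by simp
    show ?thesis using case_gt[OF sp r1 a a0 s] by blast
  qed
  then obtain c G \<kappa> where g: "gen c ?F G (hfun \<rho>1) \<alpha> \<kappa> ?lam ?R" by blast
  interpret gen c ?F G "hfun \<rho>1" \<alpha> \<kappa> ?lam ?R by (rule g)
  have bpos: "?\<beta> j > 0" for j using r by simp
  have Dpos: "D L > 0" for L
  proof -
    obtain i where "\<alpha> i \<noteq> 0" using a0 by blast
    hence ai: "\<alpha> i > 0" using a[of i] by simp
    have "?F L i > 0" using sp bpos by (intro Tp_pos) auto
    hence "\<alpha> i * ?F L i > 0" using ai by simp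
    moreover have "0 \<le> \<alpha> n * ?F L n" for n using a[of n] F_nn[of L n] by simp
    ultimately show ?thesis unfolding D_def using sum_F[of L] by (intro suminf_pos2[where i = i]) auto
  qed
  have Cpart_eq: "Cpart \<alpha> ?\<beta> \<sigma> L = D L" for L
  proof -
    have "(pathmass \<alpha> ?\<beta> \<sigma> L has_sum (\<Sum>a. \<alpha> a * Tp \<sigma> L (\<lambda>j. if True then ?\<beta> j else 0) a))
           {\<gamma>. motzkin L \<gamma> \<and> True}"
      by (rule endpoint_has_sum) (use a sp r sum_F in auto)
    hence "(pathmass \<alpha> ?\<beta> \<sigma> L has_sum D L) {\<gamma>. motzkin L \<gamma>}" unfolding D_def by simp
    thus ?thesis unfolding Cpart_def by (rule infsumI)
  qed
  have Cinit_eq: "Cinit \<alpha> \<rho>1 = C"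
  proof -
    have "((\<lambda>n. \<alpha> n * hfun \<rho>1 n) has_sum C) UNIV"
      unfolding C_def using sum_h a h_nn
      by (intro sums_nonneg_imp_has_sum) (auto simp: summable_sums)
    thus ?thesis unfolding Cinit_def by (rule infsumI)
  qed
  have h0pos: "hfun \<rho>1 n > 0" for n using hfun_pos[OF r] .
  have tight_lim: "(\<lambda>L. PrL \<alpha> ?\<beta> \<sigma> L (\<lambda>\<gamma>. \<gamma> L > M0)) \<longlonglongrightarrow> 1" for M0
  proof -
    let ?Q = "\<lambda>L a. Tp \<sigma> L (\<lambda>j. if j < Suc M0 then ?\<beta> j else 0) a"
    have Qnn: "?Q L a \<ge> 0" for L a using sp r by (intro Tp_nonneg) auto
    have QF: "?Q L a \<le> ?F L a" for L a using sp r by (intro Tp_mono) auto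
    have QR: "?Q L a \<le> \<rho>1 ^ M0 * ?R (Suc M0) L a" for L a
    proof -
      have "?Q L a \<le> Tp \<sigma> L (\<lambda>j. \<rho>1 ^ M0 * (if j < Suc M0 then 1 else 0)) a"
        using sp r by (intro Tp_mono) (auto intro: power_increasing)
      thus ?thesis by (simp only: Tp_cmult)
    qed
    have sQ: "summable (\<lambda>a. \<alpha> a * ?Q L a)" for L
      by (rule summable_comparison_test[OF _ sum_F[of L]]) (use Qnn QF a in \<open>auto intro!: mult_left_mono\<close>)
    have sR: "summable (\<lambda>a. \<alpha> a * ?R (Suc M0) L a)" for L
      by (rule summable_comparison_test[OF _ sum_F[of L]]) (use R_nn R_le a in \<open>auto intro!: mult_left_mono\<close>)
    have fe: "(\<lambda>j. if M0 < j then ?\<beta> j else 0) = (\<lambda>j. ?\<beta> j - (if j < Suc M0 then ?\<beta> j else 0))"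
      by (rule ext) auto
    have eqP: "Tp \<sigma> L (\<lambda>j. if M0 < j then ?\<beta> j else 0) a = ?F L a - ?Q L a" for L a
      unfolding fe by (rule Tp_diff)
    have sFQ: "summable (\<lambda>a. \<alpha> a * Tp \<sigma> L (\<lambda>j. if M0 < j then ?\<beta> j else 0) a)" for L
      unfolding eqP right_diff_distrib by (intro summable_diff sum_F sQ)
    have Pr: "PrL \<alpha> ?\<beta> \<sigma> L (\<lambda>\<gamma>. \<gamma> L > M0) = 1 - (\<Sum>a. \<alpha> a * ?Q L a) / D L" for L
    proof -
      have "(pathmass \<alpha> ?\<beta> \<sigma> L has_sum (\<Sum>a. \<alpha> a * Tp \<sigma> L (\<lambda>j. if M0 < j then ?\<beta> j else 0) a))
             {\<gamma>. motzkin L \<gamma> \<and> M0 < \<gamma> L}"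
        by (rule endpoint_has_sum[where P = "\<lambda>j. M0 < j"]) (use a sp r sFQ in auto)
      hence "infsum (pathmass \<alpha> ?\<beta> \<sigma> L) {\<gamma>. motzkin L \<gamma> \<and> M0 < \<gamma> L}
             = (\<Sum>a. \<alpha> a * Tp \<sigma> L (\<lambda>j. if M0 < j then ?\<beta> j else 0) a)" by (rule infsumI)
      also have "\<dots> = (\<Sum>a. \<alpha> a * ?F L a - \<alpha> a * ?Q L a)" unfolding eqP right_diff_distrib ..
      also have "\<dots> = D L - (\<Sum>a. \<alpha> a * ?Q L a)" unfolding D_def by (rule suminf_diff[OF sum_F sQ, symmetric])
      finally show ?thesis unfolding PrL_def Cpart_eq using Dpos[of L] by (simp add: diff_divide_distrib)
    qed
    have z: "(\<lambda>L. (\<Sum>a. \<alpha> a * ?Q L a) / D L) \<longlonglongrightarrow> 0"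
    proof (rule tendsto_sandwich[OF _ _ tendsto_const])
      show "eventually (\<lambda>L. 0 \<le> (\<Sum>a. \<alpha> a * ?Q L a) / D L) sequentially"
        using Dpos a Qnn sQ by (intro always_eventually allI divide_nonneg_pos suminf_nonneg) (auto intro: less_imp_le)
      show "eventually (\<lambda>L. (\<Sum>a. \<alpha> a * ?Q L a) / D L \<le> \<rho>1 ^ M0 * ((\<Sum>a. \<alpha> a * ?R (Suc M0) L a) / D L)) sequentially"
      proof (intro always_eventually allI)
        fix L
        have "(\<Sum>a. \<alpha> a * ?Q L a) \<le> (\<Sum>a. \<rho>1 ^ M0 * (\<alpha> a * ?R (Suc M0) L a))"
          using QR a sQ summable_mult[OF sR[of L], of "\<rho>1 ^ M0"]
          by (intro suminf_le) (auto simp: mult_left_mono mult.left_commute)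
        also have "\<dots> = \<rho>1 ^ M0 * (\<Sum>a. \<alpha> a * ?R (Suc M0) L a)" by (rule suminf_mult[OF sR])
        finally show "(\<Sum>a. \<alpha> a * ?Q L a) / D L \<le> \<rho>1 ^ M0 * ((\<Sum>a. \<alpha> a * ?R (Suc M0) L a) / D L)"
          using Dpos[of L] by (simp add: divide_right_mono)
      qed
      show "(\<lambda>L. \<rho>1 ^ M0 * ((\<Sum>a. \<alpha> a * ?R (Suc M0) L a) / D L)) \<longlonglongrightarrow> 0"
        using tendsto_mult[OF tendsto_const R_sum_lim, of "\<rho>1 ^ M0" "Suc M0"] by simp
    qed
    have "(\<lambda>L. 1 - (\<Sum>a. \<alpha> a * ?Q L a) / D L) \<longlonglongrightarrow> 1 - 0" by (intro tendsto_diff tendsto_const z)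
    thus ?thesis unfolding Pr by simp
  qed
  have part1: "\<not> (\<forall>\<epsilon>>0. \<exists>M::nat. \<forall>L\<ge>1. PrL \<alpha> ?\<beta> \<sigma> L (\<lambda>\<gamma>. \<gamma> L > M) \<le> \<epsilon>)"
  proof
    assume H: "\<forall>\<epsilon>>0. \<exists>M::nat. \<forall>L\<ge>1. PrL \<alpha> ?\<beta> \<sigma> L (\<lambda>\<gamma>. \<gamma> L > M) \<le> \<epsilon>"
    obtain M where M: "\<forall>L\<ge>1. PrL \<alpha> ?\<beta> \<sigma> L (\<lambda>\<gamma>. \<gamma> L > M) \<le> 1 / 2"
      using H[rule_format, of "1 / 2"] by auto
    have "eventually (\<lambda>L. PrL \<alpha> ?\<beta> \<sigma> L (\<lambda>\<gamma>. \<gamma> L > M) > 1 / 2) sequentially"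
      by (rule order_tendstoD[OF tight_lim]) simp
    then obtain L0 where L0: "\<And>L. L \<ge> L0 \<Longrightarrow> PrL \<alpha> ?\<beta> \<sigma> L (\<lambda>\<gamma>. \<gamma> L > M) > 1 / 2"
      by (auto simp: eventually_sequentially)
    have "PrL \<alpha> ?\<beta> \<sigma> (max L0 1) (\<lambda>\<gamma>. \<gamma> (max L0 1) > M) > 1 / 2" using L0 by simp
    moreover have "PrL \<alpha> ?\<beta> \<sigma> (max L0 1) (\<lambda>\<gamma>. \<gamma> (max L0 1) > M) \<le> 1 / 2" using M by simp
    ultimately show False by simp
  qed
  have part2: "(\<lambda>L. PrL \<alpha> ?\<beta> \<sigma> L
                   (\<lambda>\<gamma>. (\<forall>k\<le>K. \<gamma> k = z k) \<and> (\<forall>k\<in>{1..K}. incr L \<gamma> k = x k)))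
           \<longlonglongrightarrow> Z0law \<alpha> \<rho>1 (z 0) * (\<Prod>k<K. Qker \<rho>1 \<sigma> (z k) (z (Suc k)))
                 * (\<Prod>k\<in>{1..K}. xilaw \<rho>1 \<sigma> (x k))" for K z x
  proof -
    let ?y = "\<lambda>t. x (K + 1 - t)"
    let ?g = "Vr (wy \<sigma> ?y) K ?\<beta>"
    let ?cx = "\<Prod>t\<in>{1..K}. xf \<rho>1 \<sigma> (?y t)"
    let ?stp = "\<Prod>t\<in>{1..K}. stw \<sigma> (z (t - 1)) (z t)"
    let ?B = "((\<sigma> + 1) * \<rho>1) ^ K"
    have es: "(\<forall>j\<ge>0 + K. ?g j = 1 * ?cx * \<rho>1 ^ j) \<and> (\<forall>j. 0 \<le> ?g j \<and> ?g j \<le> 1 * ?B * \<rho>1 ^ j)"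
      by (rule end_seg) (use r sp in auto)
    have cx0: "?cx \<ge> 0" using r sp by (intro prod_nonneg) (auto simp: xf_def)
    define rr where "rr j = ?g j - ?cx * ?\<beta> j" for j
    define E where "E = (?B + ?cx) * \<rho>1 ^ K"
    have rb: "\<bar>rr j\<bar> \<le> E * (if j < K then 1 else 0)" for j
    proof (cases "j < K")
      case False thus ?thesis using es unfolding rr_def by simp
    next
      case True
      have "\<bar>rr j\<bar> \<le> ?g j + ?cx * ?\<beta> j" unfolding rr_def using es cx0 r by (auto simp: abs_le_iff)
      also have "\<dots> \<le> ?B * \<rho>1 ^ j + ?cx * \<rho>1 ^ j" using es cx0 by (intro add_mono) auto
      also have "\<dots> = (?B + ?cx) * \<rho>1 ^ j" by (simp add: algebra_simps)
      also have "\<dots> \<le> (?B + ?cx) * \<rho>1 ^ K"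
        using True r cx0 sp by (intro mult_left_mono power_increasing) auto
      finally show ?thesis using True unfolding E_def by simp
    qed
    have gdec: "?g = (\<lambda>j. ?cx * ?\<beta> j + rr j)" unfolding rr_def by auto
    have TpG: "Tp \<sigma> M ?g i = ?cx * ?F M i + Tp \<sigma> M rr i" for M i
      unfolding gdec by (simp only: Tp_add Tp_cmult)
    have eb: "\<bar>Tp \<sigma> M rr i\<bar> \<le> E * ?R K M i" for M i
    proof -
      have "\<bar>Tp \<sigma> M rr i\<bar> \<le> Tp \<sigma> M (\<lambda>j. E * (if j < K then 1 else 0)) i"
        using sp rb by (intro Tp_abs) auto
      thus ?thesis by (simp only: Tp_cmult)
    qed
    have PrM: "PrL \<alpha> ?\<beta> \<sigma> (M + (K + K)) (\<lambda>\<gamma>. (\<forall>k\<le>K. \<gamma> k = z k) \<and> (\<forall>k\<in>{1..K}. incr (M + (K + K)) \<gamma> k = x k))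
          = \<alpha> (z 0) * ?stp * (?cx * (?F M (z K) / D (M + (K + K))) + Tp \<sigma> M rr (z K) / D (M + (K + K)))" for M
    proof -
      have LL: "M + (K + K) = K + M + K" by simp
      have "infsum (pathmass \<alpha> ?\<beta> \<sigma> (M + (K + K)))
              {\<gamma>. motzkin (M + (K + K)) \<gamma> \<and> ((\<forall>k\<le>K. \<gamma> k = z k) \<and> (\<forall>k\<in>{1..K}. incr (M + (K + K)) \<gamma> k = x k))}
            = \<alpha> (z 0) * Vr (wc \<sigma> K (M + (K + K)) z x) (M + (K + K)) ?\<beta> (z 0)"
        by (rule cyl_sum) simp
      also have "Vr (wc \<sigma> K (M + (K + K)) z x) (M + (K + K)) ?\<beta> (z 0) = ?stp * Tp \<sigma> M ?g (z K)"
        unfolding LL by (rule cyl_decomp)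
      finally show ?thesis
        unfolding PrL_def Cpart_eq TpG using Dpos[of "M + (K + K)"] by (simp add: field_simps)
    qed
    have l1: "(\<lambda>M. ?F M (z K) / D (M + (K + K))) \<longlonglongrightarrow> \<kappa> * hfun \<rho>1 (z K) / (?lam ^ (K + K) * (\<kappa> * C))"
      by (rule shift_lim[OF F_lim])
    have l2: "(\<lambda>M. ?R K M (z K) / D (M + (K + K))) \<longlonglongrightarrow> 0 / (?lam ^ (K + K) * (\<kappa> * C))"
      by (rule shift_lim[OF R_lim])
    have l3: "(\<lambda>M. Tp \<sigma> M rr (z K) / D (M + (K + K))) \<longlonglongrightarrow> 0"
    proof (rule Lim_null_comparison)
      show "eventually (\<lambda>M. norm (Tp \<sigma> M rr (z K) / D (M + (K + K))) \<le> E * (?R K M (z K) / D (M + (K + K)))) sequentially"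
      proof (intro always_eventually allI)
        fix M
        show "norm (Tp \<sigma> M rr (z K) / D (M + (K + K))) \<le> E * (?R K M (z K) / D (M + (K + K)))"
          using eb[of M "z K"] Dpos[of "M + (K + K)"] by (simp add: abs_divide divide_right_mono)
      qed
      show "(\<lambda>M. E * (?R K M (z K) / D (M + (K + K)))) \<longlonglongrightarrow> 0"
        using tendsto_mult[OF tendsto_const l2, of E] by simp
    qed
    have lim: "(\<lambda>M. PrL \<alpha> ?\<beta> \<sigma> (M + (K + K)) (\<lambda>\<gamma>. (\<forall>k\<le>K. \<gamma> k = z k) \<and> (\<forall>k\<in>{1..K}. incr (M + (K + K)) \<gamma> k = x k)))
        \<longlonglongrightarrow> \<alpha> (z 0) * ?stp * (?cx * (\<kappa> * hfun \<rho>1 (z K) / (?lam ^ (K + K) * (\<kappa> * C))) + 0)"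
      unfolding PrM by (intro tendsto_intros l1 l3)
    have target: "Z0law \<alpha> \<rho>1 (z 0) * (\<Prod>k<K. Qker \<rho>1 \<sigma> (z k) (z (Suc k))) * (\<Prod>k\<in>{1..K}. xilaw \<rho>1 \<sigma> (x k))
        = \<alpha> (z 0) * ?stp * (?cx * (\<kappa> * hfun \<rho>1 (z K) / (?lam ^ (K + K) * (\<kappa> * C))) + 0)"
    proof -
      have "Z0law \<alpha> \<rho>1 (z 0) * (\<Prod>k<K. Qker \<rho>1 \<sigma> (z k) (z (Suc k))) * (\<Prod>k\<in>{1..K}. xilaw \<rho>1 \<sigma> (x k))
          = \<alpha> (z 0) * hfun \<rho>1 (z 0) / C * (?stp * hfun \<rho>1 (z K) / (hfun \<rho>1 (z 0) * ?lam ^ K)) * (?cx / ?lam ^ K)"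
        unfolding Z0law_def Cinit_eq prod_Qker[OF r sp] prod_xilaw ..
      also have "\<dots> = \<alpha> (z 0) * ?stp * (?cx * (\<kappa> * hfun \<rho>1 (z K) / (?lam ^ (K + K) * (\<kappa> * C))) + 0)"
        by (rule alg2[symmetric]) (use \<kappa>_pos Cpos' h0pos lam_pos in auto)
      finally show ?thesis .
    qed
    show ?thesis using lim unfolding target by (rule LIMSEQ_offset)
  qed
  show ?thesis using part1 part2 by blast
qed


end
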